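(* Assume the setting described in the context and let $T\in(0,\infty)$ and $\Theta\in C([0,T],\mathbb R^{\mathfrak d})$ satisfy for all $t\in[0,T]$ that $\Theta_t=\Theta_0-\int_0^t\mathcal G(\Theta_s)\,ds$. Then for all $t\in[0,T]$ it holds that $\mathcal L_\infty(\Theta_t)=\mathcal L_\infty(\Theta_0)-\int_0^t\|\mathcal G(\Theta_s)\|^2\,ds$.
   Context: Setting. Let $L,\mathfrak d\in\mathbb N=\{1,2,\dots\}$, $(\ell_k)_{k\in\mathbb N_0}\subseteq\mathbb N$, $a\in\mathbb R$, $b\in(a,\infty)$, $\mathscr A\in(0,\infty)$, $\mathscr B\in(\mathscr A,\infty)$ with $\mathfrak d=\sum_{k=1}^L\ell_k(\ell_{k-1}+1)$; let $\mathbf d_k=\sum_{h=1}^k\ell_h(\ell_{h-1}+1)$ for $k\in\mathbb N_0$. For $\theta=(\theta_1,\dots,\theta_{\mathfrak d})\in\mathbb R^{\mathfrak d}$, $k\in\{1,\dots,L\}$, $i\in\{1,\dots,\ell_k\}$, $j\in\{1,\dots,\ell_{k-1}\}$ let $\mathfrak w^{k,\theta}_{i,j}=\theta_{(i-1)\ell_{k-1}+j+\mathbf d_{k-1}}$ and $\mathfrak b^{k,\theta}_i=\theta_{\ell_k\ell_{k-1}+i+\mathbf d_{k-1}}$, let $\mathfrak w^{k,\theta}=(\mathfrak w^{k,\theta}_{i,j})_{i,j}\in\mathbb R^{\ell_k\times\ell_{k-1}}$, $\mathfrak b^{k,\theta}=(\mathfrak b^{k,\theta}_1,\dots,\mathfrak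 b^{k,\theta}_{\ell_k})\in\mathbb R^{\ell_k}$, and $\mathcal A^\theta_k\colon\mathbb R^{\ell_{k-1}}\to\mathbb R^{\ell_k}$, $\mathcal A^\theta_k(x)=\mathfrak b^{k,\theta}+\mathfrak w^{k,\theta}x$. Let $\mathscr R_\infty(x)=\max\{x,0\}$ and let $\mathscr R_r\colon\mathbb R\to\mathbb R$, $r\in[1,\infty)$, satisfy for all $r\in[1,\infty)$: $\mathscr R_r\in C^1(\mathbb R,\mathbb R)$, $\mathscr R_r(x)=0$ for all $x\le\mathscr A r^{-1}$, $0\le\mathscr R_r(y)\le\max\{y,0\}$ for all $y\in\mathbb R$, $\mathscr R_r(z)=z$ for all $z\ge\mathscr B r^{-1}$; assume $\sup_{r\in[1,\infty)}\sup_{x\in\mathbb R}|(\mathscr R_r)'(x)|<\infty$. $\|\cdot\|$ is the Euclidean norm on each $\mathbb R^n$; for $r\in[1,\infty]$, $\mathfrak M_r(x_1,\dots,x_n)=(\mathscr R_r(x_1),\dots,\mathscr R_r(x_n))$. For $r\in[1,\infty]$, $\theta\in\mathbb R^{\mathfrak d}$ define $\mathcal N^{k,\theta}_r\colon\mathbb R^{\ell_0}\to\mathbb R^{\ell_k}$, $k\in\{1,\dots,L\}$, by $\mathcal N^{1,\theta}_r=\mathcal A^\theta_1$ and $\mathcal N^{k+1,\theta}_r(x)=\mathcal A^\theta_{k+1}(\mathfrak M_{r^{1/k}}(\mathcal N^{k,\theta}_r(x)))$ (with $\infty^{1/k}=\infty$). Let $\mu$ be a measure on the Borel $\sigma$-algebra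 of $[a,b]^{\ell_0}$ with $\mu([a,b]^{\ell_0})\in\mathbb R$, let $f\colon[a,b]^{\ell_0}\to\mathbb R^{\ell_L}$ be measurable, and for $r\in[1,\infty]$ let $\mathcal L_r\colon\mathbb R^{\mathfrak d}\to\mathbb R$ be given by $\mathcal L_r(\theta)=\int_{[a,b]^{\ell_0}}\|\mathcal N^{L,\theta}_r(x)-f(x)\|^2\,\mu(dx)$ (these integrals are real numbers as part of the setting). Let $\mathcal G\colon\mathbb R^{\mathfrak d}\to\mathbb R^{\mathfrak d}$ satisfy $\mathcal G(\theta)=\lim_{r\to\infty}(\nabla\mathcal L_r)(\theta)$ for every $\theta$ for which $((\nabla\mathcal L_r)(\theta))_{r\in[1,\infty)}$ is convergent as $r\to\infty$. *)

theory Defs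
  imports "HOL-Analysis.Analysis"
begin

text \<open>Number of parameters in the first k layers: d_k = sum_{h=1}^k l_h (l_{h-1}+1).\<close>
definition dpar :: "(nat \<Rightarrow> nat) \<Rightarrow> nat \<Rightarrow> nat" where
  "dpar l k = (\<Sum>h=1..k. l h * (l (h - 1) + 1))"

text \<open>The parameter vector theta lives in real^'d; the coordinate theta_n (n in 1..dd)
  is  theta $ idx n  for a fixed bijection idx from {1..dd} onto the finite index type 'd.\<close>
definition weight :: "(nat \<Rightarrow> nat) \<Rightarrow> (nat \<Rightarrow> 'd::finite) \<Rightarrow> nat \<Rightarrow> real^'d \<Rightarrow> nat \<Rightarrow> nat \<Rightarrow> real" where
  "weight l idx k \<theta> i j = \<theta> $ idx ((i - 1) * l (k - 1) + j + dpar l (k - 1))"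

definition bias :: "(nat \<Rightarrow> nat) \<Rightarrow> (nat \<Rightarrow> 'd::finite) \<Rightarrow> nat \<Rightarrow> real^'d \<Rightarrow> nat \<Rightarrow> real" where
  "bias l idx k \<theta> i = \<theta> $ idx (l k * l (k - 1) + i + dpar l (k - 1))"

text \<open>Vectors in R^{l_k} are represented as functions nat => real, coordinates 1..l_k.\<close>
definition affine :: "(nat \<Rightarrow> nat) \<Rightarrow> (nat \<Rightarrow> 'd::finite) \<Rightarrow> nat \<Rightarrow> real^'d \<Rightarrow> (nat \<Rightarrow> real) \<Rightarrow> (nat \<Rightarrow> real)" where
  "affine l idx k \<theta> x = (\<lambda>i. bias l idx k \<theta> i + (\<Sum>j=1..l (k - 1). weight l idx k \<theta> i j * x j))"

fun net :: "(nat \<Rightarrow> nat) \<Rightarrow> (nat \<Rightarrow> 'd::finite) \<Rightarrow> (nat \<Rightarrow> real \<Rightarrow> real) \<Rightarrow> real^'d \<Rightarrow> nat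
             \<Rightarrow> (nat \<Rightarrow> real) \<Rightarrow> (nat \<Rightarrow> real)" where
  "net l idx act \<theta> 0 x = x"
| "net l idx act \<theta> (Suc 0) x = affine l idx 1 \<theta> x"
| "net l idx act \<theta> (Suc (Suc k)) x =
     affine l idx (Suc (Suc k)) \<theta> (\<lambda>i. act (Suc k) (net l idx act \<theta> (Suc k) x i))"

definition relu :: "real \<Rightarrow> real" where
  "relu x = max x 0"

definition act_r :: "(real \<Rightarrow> real \<Rightarrow> real) \<Rightarrow> real \<Rightarrow> nat \<Rightarrow> real \<Rightarrow> real" where
  "act_r R r k = R (r powr (1 / real k))"

definition risk :: "(nat \<Rightarrow> nat) \<Rightarrow> (nat \<Rightarrow> 'd::finite) \<Rightarrow> nat \<Rightarrow> (nat \<Rightarrow> real \<Rightarrow> real)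
      \<Rightarrow> (nat \<Rightarrow> real) measure \<Rightarrow> ((nat \<Rightarrow> real) \<Rightarrow> (nat \<Rightarrow> real)) \<Rightarrow> real^'d \<Rightarrow> real" where
  "risk l idx L act \<mu> f \<theta> =
     (\<integral>x. (\<Sum>i=1..l L. (net l idx act \<theta> L x i - f x i)\<^sup>2) \<partial>\<mu>)"

definition grad :: "('a::real_inner \<Rightarrow> real) \<Rightarrow> 'a \<Rightarrow> 'a" where
  "grad F \<theta> = (SOME g. (F has_derivative (\<lambda>h. g \<bullet> h)) (at \<theta>))"

end

theory Submission
  imports Defs
begin

lemma deriv_under_integral:
  fixes h :: "'v::euclidean_space \<Rightarrow> 'a \<Rightarrow> real" and D :: "'v \<Rightarrow> 'a \<Rightarrow> 'v"
  assumes int_h: "\<And>\<theta>. integrable M (h \<theta>)"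
    and int_D: "integrable M (D \<theta>0)"
    and der: "\<And>\<theta> x. x \<in> space M \<Longrightarrow> ((\<lambda>\<theta>. h \<theta> x) has_derivative (\<lambda>v. D \<theta> x \<bullet> v)) (at \<theta>)"
    and w: "integrable M w"
    and bnd: "\<And>\<theta> x. norm (\<theta> - \<theta>0) \<le> 1 \<Longrightarrow> x \<in> space M \<Longrightarrow> norm (D \<theta> x) \<le> w x"
  shows "((\<lambda>\<theta>. \<integral>x. h \<theta> x \<partial>M) has_derivative (\<lambda>v. (\<integral>x. D \<theta>0 x \<partial>M) \<bullet> v)) (at \<theta>0)"
proof -
  let ?c = "\<integral>x. D \<theta>0 x \<partial>M"
  let ?F = "\<lambda>\<theta>. \<integral>x. h \<theta> x \<partial>M"
  have lip: "\<bar>h \<theta> x - h \<theta>0 x\<bar> \<le> w x * norm (\<theta> - \<theta>0)"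
    if "norm (\<theta> - \<theta>0) \<le> 1" "x \<in> space M" for \<theta> x
  proof -
    have "norm (h \<theta> x - h \<theta>0 x) \<le> w x * norm (\<theta> - \<theta>0)"
    proof (rule differentiable_bound[where S="cball \<theta>0 1" and f'="\<lambda>\<theta> v. D \<theta> x \<bullet> v"])
      show "convex (cball \<theta>0 (1::real))" by simp
      show "((\<lambda>\<theta>. h \<theta> x) has_derivative (\<lambda>v. D y x \<bullet> v)) (at y within cball \<theta>0 1)" for y
        using der[OF that(2)] by (rule has_derivative_at_withinI)
      show "onorm (\<lambda>v. D y x \<bullet> v) \<le> w x" if "y \<in> cball \<theta>0 1" for y
      proof (rule onorm_le)
        fix v
        have "norm (D y x \<bullet> v) \<le> norm (D y x) * norm v"
          by (simp add: Cauchy_Schwarz_ineq2)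
        also have "\<dots> \<le> w x * norm v"
          using bnd[of y x] that \<open>x \<in> space M\<close> by (intro mult_right_mono) (auto simp: dist_norm norm_minus_commute)
        finally show "norm (D y x \<bullet> v) \<le> w x * norm v" .
      qed
      show "\<theta> \<in> cball \<theta>0 1" "\<theta>0 \<in> cball \<theta>0 1" using that by (auto simp: dist_norm norm_minus_commute)
    qed
    then show ?thesis by simp
  qed
  have "((\<lambda>y. (?F y - ?F \<theta>0 - ?c \<bullet> (y - \<theta>0)) /\<^sub>R norm (y - \<theta>0)) \<longlongrightarrow> 0) (at \<theta>0)"
    unfolding tendsto_at_iff_sequentially
  proof (intro allI impI)
    fix X :: "nat \<Rightarrow> 'v" assume X: "\<forall>i. X i \<in> UNIV - {\<theta>0}" "X \<longlonglongrightarrow> \<theta>0"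
    define q where "q n x = (h (X n) x - h \<theta>0 x - D \<theta>0 x \<bullet> (X n - \<theta>0)) /\<^sub>R norm (X n - \<theta>0)" for n x
    have eq: "((\<lambda>y. (?F y - ?F \<theta>0 - ?c \<bullet> (y - \<theta>0)) /\<^sub>R norm (y - \<theta>0)) \<circ> X) n = (\<integral>x. q n x \<partial>M)" for n
    proof -
      have "(\<integral>x. q n x \<partial>M) = (\<integral>x. (h (X n) x - h \<theta>0 x - D \<theta>0 x \<bullet> (X n - \<theta>0)) \<partial>M) / norm (X n - \<theta>0)"
        unfolding q_def by (simp add: integral_divide_zero divide_inverse_commute)
      also have "(\<integral>x. (h (X n) x - h \<theta>0 x - D \<theta>0 x \<bullet> (X n - \<theta>0)) \<partial>M) = ?F (X n) - ?F \<theta>0 - ?c \<bullet> (X n - \<theta>0)"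
        using int_h int_D by (simp add: integral_diff integral_inner_left)
      finally show ?thesis by (simp add: divide_inverse_commute)
    qed
    have lim: "(\<lambda>n. \<integral>x. q n x \<partial>M) \<longlonglongrightarrow> (\<integral>x. 0 \<partial>M)"
    proof -
      from X(2) have "eventually (\<lambda>n. norm (X n - \<theta>0) \<le> 1) sequentially"
        by (simp add: LIMSEQ_iff_nz eventually_sequentially dist_norm) (meson dual_order.strict_implies_order zero_less_one)
      then obtain N where N: "\<And>n. n \<ge> N \<Longrightarrow> norm (X n - \<theta>0) \<le> 1" by (auto simp: eventually_sequentially)
      have "(\<lambda>n. \<integral>x. q (n + N) x \<partial>M) \<longlonglongrightarrow> (\<integral>x. 0 \<partial>M)"
      proof (rule integral_dominated_convergence[where w="\<lambda>x. 2 * w x"])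
        show "(\<lambda>x. 0::real) \<in> borel_measurable M" by simp
        show "(\<lambda>x. q (n + N) x) \<in> borel_measurable M" for n
          unfolding q_def using int_h int_D by (intro borel_measurable_scaleR borel_measurable_diff borel_measurable_inner) auto
        show "integrable M (\<lambda>x. 2 * w x)" using w by simp
        show "AE x in M. (\<lambda>n. q (n + N) x) \<longlonglongrightarrow> 0"
        proof (rule AE_I2)
          fix x assume x: "x \<in> space M"
          have "((\<lambda>y. (h y x - h \<theta>0 x - D \<theta>0 x \<bullet> (y - \<theta>0)) /\<^sub>R norm (y - \<theta>0)) \<longlongrightarrow> 0) (at \<theta>0)"
            using der[OF x, of \<theta>0] unfolding has_derivative_at_within by simp
          then have "(\<lambda>n. q n x) \<longlonglongrightarrow> 0"
            unfolding tendsto_at_iff_sequentially q_def using X by (auto simp: o_def)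
          then show "(\<lambda>n. q (n + N) x) \<longlonglongrightarrow> 0" by (rule LIMSEQ_ignore_initial_segment)
        qed
        show "AE x in M. norm (q (n + N) x) \<le> 2 * w x" for n
        proof (rule AE_I2)
          fix x assume x: "x \<in> space M"
          have n1: "norm (X (n + N) - \<theta>0) \<le> 1" using N by simp
          have nz: "norm (X (n + N) - \<theta>0) > 0" using X(1) by auto
          have "\<bar>h (X (n+N)) x - h \<theta>0 x - D \<theta>0 x \<bullet> (X (n+N) - \<theta>0)\<bar> \<le>
                \<bar>h (X (n+N)) x - h \<theta>0 x\<bar> + \<bar>D \<theta>0 x \<bullet> (X (n+N) - \<theta>0)\<bar>" by linarith
          also have "\<dots> \<le> w x * norm (X (n + N) - \<theta>0) + w x * norm (X (n + N) - \<theta>0)"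
          proof (intro add_mono lip n1 x)
            have "\<bar>D \<theta>0 x \<bullet> (X (n+N) - \<theta>0)\<bar> \<le> norm (D \<theta>0 x) * norm (X (n+N) - \<theta>0)"
              by (simp add: Cauchy_Schwarz_ineq2)
            also have "\<dots> \<le> w x * norm (X (n + N) - \<theta>0)"
              using bnd[of \<theta>0 x] x by (intro mult_right_mono) auto
            finally show "\<bar>D \<theta>0 x \<bullet> (X (n+N) - \<theta>0)\<bar> \<le> w x * norm (X (n + N) - \<theta>0)" .
          qed
          finally show "norm (q (n + N) x) \<le> 2 * w x"
            unfolding q_def using nz by (simp add: divide_simps)
        qed
      qed
      then show ?thesis by (rule LIMSEQ_offset)
    qed
    then show "((\<lambda>y. (?F y - ?F \<theta>0 - ?c \<bullet> (y - \<theta>0)) /\<^sub>R norm (y - \<theta>0)) \<circ> X) \<longlonglongrightarrow> 0"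
      unfolding eq by simp
  qed
  then show ?thesis
    unfolding has_derivative_at_within by (simp add: bounded_linear_inner_right)
qed

lemma cont_under_integral:
  fixes D :: "'v::euclidean_space \<Rightarrow> 'a \<Rightarrow> 'w::{banach,second_countable_topology}"
  assumes meas: "\<And>\<theta>. D \<theta> \<in> borel_measurable M"
    and cont: "\<And>x. x \<in> space M \<Longrightarrow> continuous_on UNIV (\<lambda>\<theta>. D \<theta> x)"
    and bnd: "\<And>\<rho>. \<exists>w. integrable M w \<and> (\<forall>\<theta> x. norm \<theta> \<le> \<rho> \<longrightarrow> x \<in> space M \<longrightarrow> norm (D \<theta> x) \<le> w x)"
  shows "continuous_on UNIV (\<lambda>\<theta>. \<integral>x. D \<theta> x \<partial>M)"
proof (rule continuous_on_sequentiallyI)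
  fix u :: "nat \<Rightarrow> 'v" and a assume u: "u \<longlonglongrightarrow> a"
  have "Bseq u" using u by (intro convergent_imp_Bseq convergentI)
  then obtain K where K: "\<And>n. norm (u n) \<le> K" by (metis BseqE)
  obtain w where w: "integrable M w" "\<And>\<theta> x. norm \<theta> \<le> K \<Longrightarrow> x \<in> space M \<Longrightarrow> norm (D \<theta> x) \<le> w x"
    using bnd[of K] by blast
  show "(\<lambda>n. \<integral>x. D (u n) x \<partial>M) \<longlonglongrightarrow> (\<integral>x. D a x \<partial>M)"
  proof (rule integral_dominated_convergence[where w=w])
    show "AE x in M. (\<lambda>n. D (u n) x) \<longlonglongrightarrow> D a x"
    proof (rule AE_I2)
      fix x assume "x \<in> space M"
      then have "isCont (\<lambda>\<theta>. D \<theta> x) a" using cont by (simp add: continuous_on_eq_continuous_at)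
      then show "(\<lambda>n. D (u n) x) \<longlonglongrightarrow> D a x" using u by (rule isCont_tendsto_compose)
    qed
    show "AE x in M. norm (D (u n) x) \<le> w x" for n using w K by auto
  qed (use meas w in auto)
qed

lemma set_integral_split:
  fixes k :: "real \<Rightarrow> 'b::{banach, second_countable_topology}"
  assumes "set_integrable lborel {0..T} k" "0 \<le> u" "u \<le> v" "v \<le> T"
  shows "(LINT s:{0..v}|lborel. k s) = (LINT s:{0..u}|lborel. k s) + (LINT s:{u<..v}|lborel. k s)"
proof -
  have "{0..v} = {0..u} \<union> {u<..v}" using assms by auto
  moreover have "set_integrable lborel {0..u} k" "set_integrable lborel {u<..v} k"
    using assms by (auto intro: set_integrable_subset)
  ultimately show ?thesis by (metis set_integral_Un Int_emptyI greaterThanAtMost_iff atLeastAtMost_iff not_less)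
qed

lemma set_integral_zero_point:
  fixes k :: "real \<Rightarrow> 'b::{banach, second_countable_topology}"
  shows "(LINT s:{0..0}|lborel. k s) = 0"
  unfolding set_lebesgue_integral_def
  by (rule integral_eq_zero_AE) (use AE_lborel_singleton[of 0] in \<open>auto elim!: eventually_mono\<close>)

lemma eps_zero:
  fixes x c :: real
  assumes "c \<ge> 0" "\<And>e. e > 0 \<Longrightarrow> \<bar>x\<bar> \<le> e * c"
  shows "x = 0"
proof (rule ccontr)
  assume "x \<noteq> 0"
  define e where "e = \<bar>x\<bar> / (2 * (c + 1))"
  have "e > 0" using \<open>x \<noteq> 0\<close> assms(1) by (simp add: e_def)
  then have "\<bar>x\<bar> \<le> e * c" by (rule assms(2))
  also have "e * c < \<bar>x\<bar>" using \<open>x \<noteq> 0\<close> assms(1) unfolding e_def by (simp add: field_simps) (smt (verit) mult_nonneg_nonneg abs_ge_zero)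
  finally show False by simp
qed

lemma chain_rule_integral:
  fixes F :: "'v::euclidean_space \<Rightarrow> real" and DF :: "'v \<Rightarrow> 'v" and \<Theta> :: "real \<Rightarrow> 'v" and g :: "real \<Rightarrow> 'v"
  assumes F: "\<And>\<theta>. (F has_derivative (\<lambda>h. DF \<theta> \<bullet> h)) (at \<theta>)"
    and DFc: "continuous_on UNIV DF"
    and \<Theta>c: "continuous_on {0..T} \<Theta>"
    and gi: "set_integrable lborel {0..T} g"
    and \<Theta>eq: "\<And>t. t \<in> {0..T} \<Longrightarrow> \<Theta> t = \<Theta> 0 - (LINT s:{0..t}|lborel. g s)"
    and t: "t \<in> {0..T}"
  shows "F (\<Theta> t) = F (\<Theta> 0) - (LINT s:{0..t}|lborel. DF (\<Theta> s) \<bullet> g s)"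
proof -
  have T0: "0 \<le> T" using t by auto
  have "compact (\<Theta> ` {0..T})" using \<Theta>c by (intro compact_continuous_image) auto
  then obtain \<rho> where \<rho>: "\<And>s. s \<in> {0..T} \<Longrightarrow> norm (\<Theta> s) \<le> \<rho>"
    by (meson bounded_iff compact_imp_bounded imageI)
  define K where "K = cball (0::'v) \<rho>"
  have K: "compact K" "convex K" unfolding K_def by auto
  have \<Theta>K: "\<Theta> s \<in> K" if "s \<in> {0..T}" for s using \<rho>[OF that] by (simp add: K_def)
  have "compact (DF ` K)" using K DFc by (intro compact_continuous_image) (auto intro: continuous_on_subset)
  then obtain B where B: "\<And>y. y \<in> K \<Longrightarrow> norm (DF y) \<le> B"
    by (meson bounded_iff compact_imp_bounded imageI)
  have ucDF: "uniformly_continuous_on K DF"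
    using K DFc by (intro compact_uniformly_continuous) (auto intro: continuous_on_subset)
  have uc\<Theta>: "uniformly_continuous_on {0..T} \<Theta>"
    using \<Theta>c by (intro compact_uniformly_continuous) auto
  have meas_DF: "set_borel_measurable lborel {0..T} (\<lambda>s. DF (\<Theta> s))"
    unfolding set_borel_measurable_def measurable_lborel2
    by (rule borel_measurable_continuous_on_indicator)
       (auto intro!: continuous_on_compose2[OF DFc \<Theta>c])
  have meas_g: "set_borel_measurable lborel {0..T} g"
    using gi unfolding set_integrable_def set_borel_measurable_def by auto
  have hi: "set_integrable lborel {0..T} (\<lambda>s. DF (\<Theta> s) \<bullet> g s)"
  proof (rule set_integrable_bound[where f="\<lambda>s. B *\<^sub>R g s"])
    show "set_integrable lborel {0..T} (\<lambda>s. B *\<^sub>R g s)" using gi by (rule set_integrable_scaleR_right)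
    have "(\<lambda>x. (indicator {0..T} x *\<^sub>R DF (\<Theta> x)) \<bullet> (indicator {0..T} x *\<^sub>R g x)) \<in> borel_measurable lborel"
      using meas_DF meas_g unfolding set_borel_measurable_def by (rule borel_measurable_inner)
    then show "set_borel_measurable lborel {0..T} (\<lambda>s. DF (\<Theta> s) \<bullet> g s)"
      unfolding set_borel_measurable_def by (rule measurable_cong[THEN iffD1, rotated]) (auto simp: indicator_def)
    show "AE x\<in>{0..T} in lborel. norm (DF (\<Theta> x) \<bullet> g x) \<le> norm (B *\<^sub>R g x)"
    proof (rule AE_I2, intro impI)
      fix x assume x: "x \<in> {0..T}"
      have "norm (DF (\<Theta> x) \<bullet> g x) \<le> norm (DF (\<Theta> x)) * norm (g x)" by (simp add: Cauchy_Schwarz_ineq2)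
      also have "\<dots> \<le> B * norm (g x)" using B[OF \<Theta>K[OF x]] by (simp add: mult_right_mono)
      also have "\<dots> \<le> norm (B *\<^sub>R g x)" by (simp add: mult_right_mono)
      finally show "norm (DF (\<Theta> x) \<bullet> g x) \<le> norm (B *\<^sub>R g x)" .
    qed
  qed
  have ind_abs: "\<And>x A. \<bar>indicator A x :: real\<bar> = indicator A x" by (simp split: split_indicator)
  have "integrable lborel (\<lambda>x. norm (indicator {0..T} x *\<^sub>R g x))"
    using gi unfolding set_integrable_def by (rule integrable_norm)
  then have ni: "set_integrable lborel {0..T} (\<lambda>s. norm (g s))"
    by (simp add: set_integrable_def ind_abs)
  define \<Psi> where "\<Psi> u = (LINT s:{0..u}|lborel. norm (g s))" for u
  define \<phi> where "\<phi> u = F (\<Theta> u) + (LINT s:{0..u}|lborel. DF (\<Theta> s) \<bullet> g s)" for u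
  have local: "\<bar>\<phi> v - \<phi> u\<bar> \<le> 2 * e * (\<Psi> v - \<Psi> u)"
    if uv: "0 \<le> u" "u \<le> v" "v \<le> T" and e: "e \<ge> 0"
      and close1: "\<And>s. s \<in> {u..v} \<Longrightarrow> norm (DF (\<Theta> s) - DF (\<Theta> u)) \<le> e"
      and close2: "\<And>y. y \<in> closed_segment (\<Theta> u) (\<Theta> v) \<Longrightarrow> norm (DF y - DF (\<Theta> u)) \<le> e"
    for u v e
  proof -
    have gs: "set_integrable lborel {u<..v} g" using gi uv by (auto intro: set_integrable_subset)
    have ns: "set_integrable lborel {u<..v} (\<lambda>s. norm (g s))" using ni uv by (auto intro: set_integrable_subset)
    have hs: "set_integrable lborel {u<..v} (\<lambda>s. DF (\<Theta> s) \<bullet> g s)" using hi uv by (auto intro: set_integrable_subset)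
    have d\<Theta>: "\<Theta> v - \<Theta> u = - (LINT s:{u<..v}|lborel. g s)"
      using \<Theta>eq[of v] \<Theta>eq[of u] set_integral_split[OF gi uv] uv by simp
    have d\<Psi>: "\<Psi> v - \<Psi> u = (LINT s:{u<..v}|lborel. norm (g s))"
      using set_integral_split[OF ni uv] unfolding \<Psi>_def by simp
    have n\<Theta>: "norm (\<Theta> v - \<Theta> u) \<le> \<Psi> v - \<Psi> u"
      unfolding d\<Theta> d\<Psi> norm_minus_cancel using gs by (rule set_integral_norm_bound)
    have lin: "DF (\<Theta> u) \<bullet> (\<Theta> v - \<Theta> u) = - (LINT s:{u<..v}|lborel. DF (\<Theta> u) \<bullet> g s)"
    proof -
      have "DF (\<Theta> u) \<bullet> (LINT s|lborel. indicator {u<..v} s *\<^sub>R g s) = (LINT s|lborel. DF (\<Theta> u) \<bullet> (indicator {u<..v} s *\<^sub>R g s))"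
        by (rule integral_inner_right[symmetric]) (use gs in \<open>simp add: set_integrable_def\<close>)
      then show ?thesis unfolding d\<Theta> set_lebesgue_integral_def by (simp add: inner_minus_right)
    qed
    have int2: "set_integrable lborel {u<..v} (\<lambda>s. DF (\<Theta> u) \<bullet> g s)"
      using integrable_inner_right[OF gs[unfolded set_integrable_def], of "DF (\<Theta> u)"]
      unfolding set_integrable_def by simp
    have d\<phi>: "\<phi> v - \<phi> u = (F (\<Theta> v) - F (\<Theta> u) - DF (\<Theta> u) \<bullet> (\<Theta> v - \<Theta> u))
         + (LINT s:{u<..v}|lborel. (DF (\<Theta> s) - DF (\<Theta> u)) \<bullet> g s)"
    proof -
      have "(LINT s:{u<..v}|lborel. (DF (\<Theta> s) - DF (\<Theta> u)) \<bullet> g s)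
          = (LINT s:{u<..v}|lborel. DF (\<Theta> s) \<bullet> g s) - (LINT s:{u<..v}|lborel. DF (\<Theta> u) \<bullet> g s)"
        using hs int2 by (simp add: inner_diff_left set_integral_diff)
      then show ?thesis
        unfolding \<phi>_def using set_integral_split[OF hi uv] lin by simp
    qed
    have b1: "\<bar>F (\<Theta> v) - F (\<Theta> u) - DF (\<Theta> u) \<bullet> (\<Theta> v - \<Theta> u)\<bar> \<le> e * norm (\<Theta> v - \<Theta> u)"
    proof -
      have "norm ((\<lambda>y. F y - DF (\<Theta> u) \<bullet> y) (\<Theta> v) - (\<lambda>y. F y - DF (\<Theta> u) \<bullet> y) (\<Theta> u))
            \<le> e * norm (\<Theta> v - \<Theta> u)"
      proof (rule differentiable_bound[where S="closed_segment (\<Theta> u) (\<Theta> v)" and f'="\<lambda>y h. (DF y - DF (\<Theta> u)) \<bullet> h"])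
        show "((\<lambda>y. F y - DF (\<Theta> u) \<bullet> y) has_derivative (\<lambda>h. (DF y - DF (\<Theta> u)) \<bullet> h))
              (at y within closed_segment (\<Theta> u) (\<Theta> v))" for y
          by (rule has_derivative_at_withinI, rule has_derivative_eq_rhs,
              rule has_derivative_diff[OF F has_derivative_inner_right[OF has_derivative_ident]])
             (auto simp: inner_diff_left)
        show "onorm (\<lambda>h. (DF y - DF (\<Theta> u)) \<bullet> h) \<le> e" if "y \<in> closed_segment (\<Theta> u) (\<Theta> v)" for y
        proof (rule onorm_le)
          fix h
          have "norm ((DF y - DF (\<Theta> u)) \<bullet> h) \<le> norm (DF y - DF (\<Theta> u)) * norm h"
            by (simp add: Cauchy_Schwarz_ineq2)
          also have "\<dots> \<le> e * norm h" using close2[OF that] by (simp add: mult_right_mono)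
          finally show "norm ((DF y - DF (\<Theta> u)) \<bullet> h) \<le> e * norm h" .
        qed
      qed auto
      then show ?thesis by (simp add: inner_diff_right)
    qed
    have b2: "norm (LINT s:{u<..v}|lborel. (DF (\<Theta> s) - DF (\<Theta> u)) \<bullet> g s) \<le> e * (\<Psi> v - \<Psi> u)"
    proof -
      have i3: "set_integrable lborel {u<..v} (\<lambda>s. (DF (\<Theta> s) - DF (\<Theta> u)) \<bullet> g s)"
        using hs int2 unfolding inner_diff_left by (rule set_integral_diff)
      have "norm (LINT s:{u<..v}|lborel. (DF (\<Theta> s) - DF (\<Theta> u)) \<bullet> g s)
            \<le> (LINT s:{u<..v}|lborel. norm ((DF (\<Theta> s) - DF (\<Theta> u)) \<bullet> g s))"
        using i3 by (rule set_integral_norm_bound)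
      also have "\<dots> \<le> (LINT s:{u<..v}|lborel. e * norm (g s))"
      proof (rule set_integral_mono)
        show "set_integrable lborel {u<..v} (\<lambda>s. norm ((DF (\<Theta> s) - DF (\<Theta> u)) \<bullet> g s))"
          using integrable_norm[OF i3[unfolded set_integrable_def]]
          unfolding set_integrable_def by (simp add: ind_abs abs_mult)
        show "set_integrable lborel {u<..v} (\<lambda>s. e * norm (g s))"
          using ns by (rule set_integrable_mult_right)
        fix s assume s: "s \<in> {u<..v}"
        have "norm ((DF (\<Theta> s) - DF (\<Theta> u)) \<bullet> g s) \<le> norm (DF (\<Theta> s) - DF (\<Theta> u)) * norm (g s)"
          by (simp add: Cauchy_Schwarz_ineq2)
        also have "\<dots> \<le> e * norm (g s)" using close1[of s] s by (simp add: mult_right_mono)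
        finally show "norm ((DF (\<Theta> s) - DF (\<Theta> u)) \<bullet> g s) \<le> e * norm (g s)" .
      qed
      also have "\<dots> = e * (\<Psi> v - \<Psi> u)" unfolding d\<Psi> by (simp add: set_integral_mult_right)
      finally show ?thesis .
    qed
    have "\<bar>\<phi> v - \<phi> u\<bar> \<le> e * norm (\<Theta> v - \<Theta> u) + e * (\<Psi> v - \<Psi> u)"
      unfolding d\<phi> using b1 b2 by simp
    also have "\<dots> \<le> e * (\<Psi> v - \<Psi> u) + e * (\<Psi> v - \<Psi> u)"
      using n\<Theta> e by (simp add: mult_left_mono)
    finally show ?thesis by simp
  qed
  have \<phi>0: "\<phi> 0 = F (\<Theta> 0)" unfolding \<phi>_def using set_integral_zero_point[of "\<lambda>s. DF (\<Theta> s) \<bullet> g s"] by simp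
  have \<Psi>mono: "\<Psi> u \<le> \<Psi> v" if "0 \<le> u" "u \<le> v" "v \<le> T" for u v
  proof -
    have "0 \<le> (LINT s:{u<..v}|lborel. norm (g s))" unfolding set_lebesgue_integral_def by (rule Bochner_Integration.integral_nonneg) (simp split: split_indicator)
    then show ?thesis using set_integral_split[OF ni that] unfolding \<Psi>_def by simp
  qed
  have main: "\<bar>\<phi> t - \<phi> 0\<bar> \<le> e * (\<Psi> t - \<Psi> 0)" if e: "e > 0" for e
  proof -
    obtain \<delta>1 where \<delta>1: "\<delta>1 > 0" "\<And>y z. y \<in> K \<Longrightarrow> z \<in> K \<Longrightarrow> dist z y < \<delta>1 \<Longrightarrow> dist (DF z) (DF y) < e/2"
      using ucDF e unfolding uniformly_continuous_on_def by (metis half_gt_zero)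
    obtain \<delta> where \<delta>: "\<delta> > 0" "\<And>s s'. s \<in> {0..T} \<Longrightarrow> s' \<in> {0..T} \<Longrightarrow> dist s' s < \<delta> \<Longrightarrow> dist (\<Theta> s') (\<Theta> s) < \<delta>1"
      using uc\<Theta> \<delta>1(1) unfolding uniformly_continuous_on_def by metis
    obtain n :: nat where n: "t / \<delta> < real n" using reals_Archimedean2 by blast
    have t0: "0 \<le> t" "t \<le> T" using t by auto
    have npos: "n > 0" using n t0 \<delta>(1) by (metis divide_nonneg_pos not_gr_zero of_nat_0 not_less)
    have tn: "t / real n < \<delta>" using n npos \<delta>(1) t0 by (simp add: field_simps)
    define p where "p k = t * real k / real n" for k
    have p_range: "0 \<le> p k \<and> p k \<le> T" if "k \<le> n" for k
    proof -
      have "p k \<le> t" unfolding p_def using that npos t0 by (simp add: field_simps mult_left_mono)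
      then show ?thesis using t0 unfolding p_def by auto
    qed
    have p_le: "p k \<le> p (Suc k)" for k unfolding p_def using t0 npos by (simp add: field_simps mult_left_mono)
    have p_diff: "p (Suc k) - p k = t / real n" for k unfolding p_def using npos by (simp add: field_simps)
    have step: "\<bar>\<phi> (p (Suc k)) - \<phi> (p k)\<bar> \<le> e * (\<Psi> (p (Suc k)) - \<Psi> (p k))" if k: "k < n" for k
    proof -
      have r1: "0 \<le> p k" "p k \<le> T" using p_range[of k] k by auto
      have r2: "0 \<le> p (Suc k)" "p (Suc k) \<le> T" using p_range[of "Suc k"] k by auto
      have near: "dist (\<Theta> s) (\<Theta> (p k)) < \<delta>1" if "s \<in> {p k..p (Suc k)}" for s
      proof (rule \<delta>(2))
        show "p k \<in> {0..T}" "s \<in> {0..T}" using r1 r2 that by auto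
        have "dist s (p k) \<le> t / real n" using that p_diff[of k] by (auto simp: dist_real_def)
        then show "dist s (p k) < \<delta>" using tn by simp
      qed
      have "\<bar>\<phi> (p (Suc k)) - \<phi> (p k)\<bar> \<le> 2 * (e/2) * (\<Psi> (p (Suc k)) - \<Psi> (p k))"
      proof (rule local)
        show "0 \<le> p k" "p k \<le> p (Suc k)" "p (Suc k) \<le> T" "0 \<le> e/2" using r1 r2 p_le e by auto
        show "norm (DF (\<Theta> s) - DF (\<Theta> (p k))) \<le> e/2" if "s \<in> {p k..p (Suc k)}" for s
        proof -
          have "dist (DF (\<Theta> s)) (DF (\<Theta> (p k))) < e/2"
            using \<delta>1(2)[OF \<Theta>K \<Theta>K near[OF that]] r1 r2 that by auto
          then show ?thesis by (simp add: dist_norm)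
        qed
        show "norm (DF y - DF (\<Theta> (p k))) \<le> e/2" if y: "y \<in> closed_segment (\<Theta> (p k)) (\<Theta> (p (Suc k)))" for y
        proof -
          have yK: "y \<in> K" using closed_segment_subset[OF \<Theta>K \<Theta>K K(2)] y r1 r2 by auto
          have "dist y (\<Theta> (p k)) \<le> dist (\<Theta> (p k)) (\<Theta> (p (Suc k)))" using dist_in_closed_segment[OF y] by simp
          also have "\<dots> < \<delta>1" using near[of "p (Suc k)"] p_le by (simp add: dist_commute)
          finally have "dist (DF y) (DF (\<Theta> (p k))) < e/2" using \<delta>1(2)[OF \<Theta>K yK] r1 by auto
          then show ?thesis by (simp add: dist_norm)
        qed
      qed
      then show ?thesis by simp
    qed
    have ind: "\<bar>\<phi> (p k) - \<phi> 0\<bar> \<le> e * (\<Psi> (p k) - \<Psi> 0)" if "k \<le> n" for k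
      using that
    proof (induction k)
      case 0 then show ?case by (simp add: p_def)
    next
      case (Suc k)
      then have "\<bar>\<phi> (p k) - \<phi> 0\<bar> \<le> e * (\<Psi> (p k) - \<Psi> 0)" by simp
      moreover have "\<bar>\<phi> (p (Suc k)) - \<phi> (p k)\<bar> \<le> e * (\<Psi> (p (Suc k)) - \<Psi> (p k))" using step Suc by simp
      ultimately show ?case by (simp add: algebra_simps)
    qed
    have "p n = t" unfolding p_def using npos by simp
    then show ?thesis using ind[of n] by simp
  qed
  have "\<phi> t - \<phi> 0 = 0"
  proof (rule eps_zero)
    show "0 \<le> \<Psi> t - \<Psi> 0" using \<Psi>mono[of 0 t] t by simp
  qed (use main in auto)
  then show ?thesis using \<phi>0 unfolding \<phi>_def by simp
qed

definition affgrad :: "(nat \<Rightarrow> nat) \<Rightarrow> (nat \<Rightarrow> 'd::finite) \<Rightarrow> nat \<Rightarrow> real^'d \<Rightarrow> (nat \<Rightarrow> real) \<Rightarrow> (nat \<Rightarrow> real^'d) \<Rightarrow> nat \<Rightarrow> real^'d" where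
  "affgrad l idx k \<theta> y dy i = axis (idx (l k * l (k - 1) + i + dpar l (k - 1))) 1 +
     (\<Sum>j=1..l (k - 1). y j *\<^sub>R axis (idx ((i - 1) * l (k - 1) + j + dpar l (k - 1))) 1 + weight l idx k \<theta> i j *\<^sub>R dy j)"

fun netgrad :: "(nat \<Rightarrow> nat) \<Rightarrow> (nat \<Rightarrow> 'd::finite) \<Rightarrow> (nat \<Rightarrow> real \<Rightarrow> real) \<Rightarrow> (nat \<Rightarrow> real \<Rightarrow> real) \<Rightarrow> real^'d \<Rightarrow> nat \<Rightarrow> (nat \<Rightarrow> real) \<Rightarrow> nat \<Rightarrow> real^'d" where
  "netgrad l idx act act' \<theta> 0 x = (\<lambda>i. 0)"
| "netgrad l idx act act' \<theta> (Suc 0) x = affgrad l idx 1 \<theta> x (\<lambda>j. 0)"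
| "netgrad l idx act act' \<theta> (Suc (Suc k)) x =
     affgrad l idx (Suc (Suc k)) \<theta> (\<lambda>j. act (Suc k) (net l idx act \<theta> (Suc k) x j))
       (\<lambda>j. act' (Suc k) (net l idx act \<theta> (Suc k) x j) *\<^sub>R netgrad l idx act act' \<theta> (Suc k) x j)"

lemma has_derivative_vec_nth_axis:
  "((\<lambda>\<theta>::real^'d. \<theta> $ c) has_derivative (\<lambda>h. axis c 1 \<bullet> h)) (at \<theta>0)"
proof -
  have "((\<lambda>\<theta>::real^'d. \<theta> $ c) has_derivative (\<lambda>h. h $ c)) (at \<theta>0)"
    by (rule bounded_linear.has_derivative[OF bounded_linear_vec_nth has_derivative_ident])
  then show ?thesis by (simp add: inner_axis')
qed

lemma affine_has_derivative:
  assumes "\<And>j. ((\<lambda>\<theta>. Y \<theta> j) has_derivative (\<lambda>h. dY j \<bullet> h)) (at \<theta>0)"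
  shows "((\<lambda>\<theta>. affine l idx k \<theta> (Y \<theta>) i) has_derivative (\<lambda>h. affgrad l idx k \<theta>0 (Y \<theta>0) dY i \<bullet> h)) (at \<theta>0)"
  unfolding affine_def bias_def affgrad_def
  apply (rule has_derivative_eq_rhs)
   apply (rule has_derivative_add[OF has_derivative_vec_nth_axis])
   apply (rule has_derivative_sum)
   apply (rule has_derivative_mult)
    apply (unfold weight_def)
    apply (rule has_derivative_vec_nth_axis)
   apply (rule assms)
  apply (simp add: inner_add_left inner_sum_left algebra_simps)
  done

lemma netgrad_has_derivative:
  assumes act: "\<And>k y. (act k has_real_derivative act' k y) (at y)"
  shows "((\<lambda>\<theta>. net l idx act \<theta> k x i) has_derivative (\<lambda>h. netgrad l idx act act' \<theta>0 k x i \<bullet> h)) (at \<theta>0)"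
proof (induction k arbitrary: i rule: nat_less_induct)
  case (1 n)
  show ?case
  proof (cases n)
    case 0 then show ?thesis by simp
  next
    case (Suc m)
    show ?thesis
    proof (cases m)
      case 0
      have "((\<lambda>\<theta>. affine l idx (Suc 0) \<theta> ((\<lambda>_. x) \<theta>) i) has_derivative (\<lambda>h. affgrad l idx (Suc 0) \<theta>0 ((\<lambda>_. x) \<theta>0) (\<lambda>j. 0) i \<bullet> h)) (at \<theta>0)"
        by (rule affine_has_derivative) simp
      then show ?thesis using Suc 0 by simp
    next
      case (Suc k)
      have IH: "((\<lambda>\<theta>. net l idx act \<theta> (Suc k) x j) has_derivative (\<lambda>h. netgrad l idx act act' \<theta>0 (Suc k) x j \<bullet> h)) (at \<theta>0)" for j
        using 1 \<open>n = Suc m\<close> Suc by auto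
      have "((\<lambda>\<theta>. act (Suc k) (net l idx act \<theta> (Suc k) x j)) has_derivative
             (\<lambda>h. (act' (Suc k) (net l idx act \<theta>0 (Suc k) x j) *\<^sub>R netgrad l idx act act' \<theta>0 (Suc k) x j) \<bullet> h)) (at \<theta>0)" for j
        apply (rule has_derivative_eq_rhs)
         apply (rule has_derivative_compose[OF IH[of j] has_field_derivative_imp_has_derivative[OF act]])
        apply simp
        done
      then have "((\<lambda>\<theta>. affine l idx (Suc (Suc k)) \<theta> ((\<lambda>\<theta> j. act (Suc k) (net l idx act \<theta> (Suc k) x j)) \<theta>) i) has_derivative
          (\<lambda>h. affgrad l idx (Suc (Suc k)) \<theta>0 ((\<lambda>\<theta> j. act (Suc k) (net l idx act \<theta> (Suc k) x j)) \<theta>0)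
             (\<lambda>j. act' (Suc k) (net l idx act \<theta>0 (Suc k) x j) *\<^sub>R netgrad l idx act act' \<theta>0 (Suc k) x j) i \<bullet> h)) (at \<theta>0)"
        by (intro affine_has_derivative)
      then show ?thesis using \<open>n = Suc m\<close> Suc by simp
    qed
  qed
qed

lemma net_cont:
  assumes act: "\<And>k y. (act k has_real_derivative act' k y) (at y)"
  shows "continuous_on UNIV (\<lambda>\<theta>. net l idx act \<theta> k x i)"
  unfolding continuous_on_eq_continuous_at[OF open_UNIV]
proof
  fix \<theta>0 :: "real^'a"
  have "((\<lambda>\<theta>. net l idx act \<theta> k x i) has_derivative (\<lambda>h. netgrad l idx act act' \<theta>0 k x i \<bullet> h)) (at \<theta>0)"
    by (rule netgrad_has_derivative) (rule act)
  then show "isCont (\<lambda>\<theta>. net l idx act \<theta> k x i) \<theta>0" by (rule has_derivative_continuous)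
qed

lemma netgrad_cont:
  assumes act: "\<And>k y. (act k has_real_derivative act' k y) (at y)"
    and c: "\<And>k. continuous_on UNIV (act' k)"
  shows "continuous_on UNIV (\<lambda>\<theta>. netgrad l idx act act' \<theta> k x i)"
proof (induction k arbitrary: i rule: nat_less_induct)
  case (1 n)
  have ca: "continuous_on UNIV (act k)" for k
    unfolding continuous_on_eq_continuous_at[OF open_UNIV] using act DERIV_isCont by blast
  show ?case
  proof (cases n)
    case 0 then show ?thesis by simp
  next
    case (Suc m)
    show ?thesis
    proof (cases m)
      case 0
      then show ?thesis using Suc by (simp add: affgrad_def weight_def continuous_intros)
    next
      case (Suc k)
      have IH: "continuous_on UNIV (\<lambda>\<theta>. netgrad l idx act act' \<theta> (Suc k) x j)" for j
        using 1 \<open>n = Suc m\<close> Suc by auto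
      have c1: "continuous_on UNIV (\<lambda>\<theta>. act (Suc k) (net l idx act \<theta> (Suc k) x j))" for j
        by (rule continuous_on_compose2[OF ca net_cont[OF act]]) auto
      have c2: "continuous_on UNIV (\<lambda>\<theta>. act' (Suc k) (net l idx act \<theta> (Suc k) x j))" for j
        by (rule continuous_on_compose2[OF c net_cont[OF act]]) auto
      show ?thesis using \<open>n = Suc m\<close> Suc
        by (simp add: affgrad_def weight_def) (intro continuous_intros c1 c2 IH)
    qed
  qed
qed

lemma net_meas:
  assumes ma: "\<And>k. act k \<in> borel_measurable borel" and ma': "\<And>k. act' k \<in> borel_measurable borel"
    and mx: "\<And>j. j \<in> {1..l 0} \<Longrightarrow> (\<lambda>x. x j) \<in> borel_measurable M"
  shows "(\<lambda>x. net l idx act \<theta> (Suc k) x i) \<in> borel_measurable M \<and> (\<lambda>x. netgrad l idx act act' \<theta> (Suc k) x i) \<in> borel_measurable M"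
proof (induction k arbitrary: i)
  case 0
  show ?case
    by (simp add: affine_def affgrad_def) (intro conjI borel_measurable_add borel_measurable_sum borel_measurable_times borel_measurable_scaleR borel_measurable_const mx; simp)
next
  case (Suc k)
  have m1: "(\<lambda>x. act (Suc k) (net l idx act \<theta> (Suc k) x j)) \<in> borel_measurable M" for j
    using Suc.IH[of j] ma by (auto intro: measurable_compose)
  have m2: "(\<lambda>x. act' (Suc k) (net l idx act \<theta> (Suc k) x j)) \<in> borel_measurable M" for j
    using Suc.IH[of j] ma' by (auto intro: measurable_compose)
  show ?case
    by (simp add: affine_def affgrad_def) (intro conjI borel_measurable_add borel_measurable_sum borel_measurable_times borel_measurable_scaleR borel_measurable_const m1 m2 Suc.IH[THEN conjunct2])
qed

lemma affine_bound:
  assumes "norm \<theta> \<le> \<rho>" "\<And>j. j \<in> {1..l (k - 1)} \<Longrightarrow> \<bar>y j\<bar> \<le> M"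
  shows "\<bar>affine l idx k \<theta> y i\<bar> \<le> \<rho> + real (l (k - 1)) * (\<rho> * M)"
proof -
  have comp: "\<bar>\<theta> $ c\<bar> \<le> \<rho>" for c using component_le_norm_cart[of \<theta> c] assms(1) by simp
  have "\<bar>affine l idx k \<theta> y i\<bar> \<le> \<bar>bias l idx k \<theta> i\<bar> + (\<Sum>j=1..l (k - 1). \<bar>weight l idx k \<theta> i j * y j\<bar>)"
    unfolding affine_def by (rule order_trans[OF abs_triangle_ineq add_left_mono[OF sum_abs]])
  also have "\<dots> \<le> \<rho> + (\<Sum>j=1..l (k - 1). \<rho> * M)"
  proof (intro add_mono sum_mono)
    show "\<bar>bias l idx k \<theta> i\<bar> \<le> \<rho>" unfolding bias_def by (rule comp)
    fix j assume j: "j \<in> {1..l (k - 1)}"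
    show "\<bar>weight l idx k \<theta> i j * y j\<bar> \<le> \<rho> * M"
      unfolding abs_mult weight_def by (intro mult_mono comp assms(2) j) (use order_trans[OF norm_ge_zero assms(1)] in auto)
  qed
  finally show ?thesis by simp
qed

lemma affgrad_bound:
  assumes "norm \<theta> \<le> \<rho>" "\<And>j. j \<in> {1..l (k - 1)} \<Longrightarrow> \<bar>y j\<bar> \<le> M \<and> norm (dy j) \<le> M'"
  shows "norm (affgrad l idx k \<theta> y dy i) \<le> 1 + real (l (k - 1)) * (M + \<rho> * M')"
proof -
  have comp: "\<bar>\<theta> $ c\<bar> \<le> \<rho>" for c using component_le_norm_cart[of \<theta> c] assms(1) by simp
  have "norm (affgrad l idx k \<theta> y dy i) \<le> 1 + (\<Sum>j=1..l (k - 1). norm (y j *\<^sub>R axis (idx ((i - 1) * l (k - 1) + j + dpar l (k - 1))) (1::real) + weight l idx k \<theta> i j *\<^sub>R dy j))"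
    unfolding affgrad_def by (rule order_trans[OF norm_triangle_ineq add_mono[OF _ norm_sum]]) (simp add: norm_axis_1)
  also have "\<dots> \<le> 1 + (\<Sum>j=1..l (k - 1). M + \<rho> * M')"
  proof (intro add_mono sum_mono order_refl)
    fix j assume j: "j \<in> {1..l (k - 1)}"
    have "norm (y j *\<^sub>R axis (idx ((i - 1) * l (k - 1) + j + dpar l (k - 1))) (1::real) + weight l idx k \<theta> i j *\<^sub>R dy j)
        \<le> \<bar>y j\<bar> + \<bar>weight l idx k \<theta> i j\<bar> * norm (dy j)"
      by (rule order_trans[OF norm_triangle_ineq]) (simp add: norm_axis_1)
    also have "\<dots> \<le> M + \<rho> * M'"
      using assms(2)[OF j] comp order_trans[OF norm_ge_zero assms(1)] unfolding weight_def by (intro add_mono mult_mono) auto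
    finally show "norm (y j *\<^sub>R axis (idx ((i - 1) * l (k - 1) + j + dpar l (k - 1))) (1::real) + weight l idx k \<theta> i j *\<^sub>R dy j) \<le> M + \<rho> * M'" .
  qed
  finally show ?thesis by simp
qed

lemma net_bounds:
  assumes "0 \<le> \<rho>" "0 \<le> C"
  shows "\<exists>M. \<forall>act act' \<theta> x i. (\<forall>k y. \<bar>act k y\<bar> \<le> \<bar>y\<bar>) \<longrightarrow> (\<forall>k y. \<bar>act' k y\<bar> \<le> C) \<longrightarrow> norm \<theta> \<le> \<rho> \<longrightarrow>
     (\<forall>j\<in>{1..l 0}. \<bar>x j\<bar> \<le> \<beta>) \<longrightarrow>
     \<bar>net l idx act \<theta> (Suc k) x i\<bar> \<le> M \<and> norm (netgrad l idx act act' \<theta> (Suc k) x i) \<le> M"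
proof (induction k)
  case 0
  show ?case
  proof (intro exI[of _ "max (\<rho> + real (l 0) * (\<rho> * \<beta>)) (1 + real (l 0) * (\<beta> + \<rho> * 0))"] allI impI)
    fix act :: "nat \<Rightarrow> real \<Rightarrow> real" and act' :: "nat \<Rightarrow> real \<Rightarrow> real" and \<theta> :: "real^'a" and x i
    assume h: "\<forall>k y. \<bar>act k y\<bar> \<le> \<bar>y\<bar>" "\<forall>k y. \<bar>act' k y\<bar> \<le> C" "norm \<theta> \<le> \<rho>" "\<forall>j\<in>{1..l 0}. \<bar>x j\<bar> \<le> \<beta>"
    have "\<bar>affine l idx 1 \<theta> x i\<bar> \<le> \<rho> + real (l (1 - 1)) * (\<rho> * \<beta>)"
      using h by (intro affine_bound) auto
    moreover have "norm (affgrad l idx 1 \<theta> x (\<lambda>j. 0) i) \<le> 1 + real (l (1 - 1)) * (\<beta> + \<rho> * 0)"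
      using h by (intro affgrad_bound) auto
    ultimately show "\<bar>net l idx act \<theta> (Suc 0) x i\<bar> \<le> max (\<rho> + real (l 0) * (\<rho> * \<beta>)) (1 + real (l 0) * (\<beta> + \<rho> * 0)) \<and>
       norm (netgrad l idx act act' \<theta> (Suc 0) x i) \<le> max (\<rho> + real (l 0) * (\<rho> * \<beta>)) (1 + real (l 0) * (\<beta> + \<rho> * 0))"
      by (simp add: le_max_iff_disj)
  qed
next
  case (Suc k)
  then obtain M where M: "\<And>act act' \<theta> x i. (\<forall>k y. \<bar>act k y\<bar> \<le> \<bar>y\<bar>) \<Longrightarrow> (\<forall>k y. \<bar>act' k y\<bar> \<le> C) \<Longrightarrow> norm \<theta> \<le> \<rho> \<Longrightarrow>
     (\<forall>j\<in>{1..l 0}. \<bar>x j\<bar> \<le> \<beta>) \<Longrightarrow>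
     \<bar>net l idx act \<theta> (Suc k) x i\<bar> \<le> M \<and> norm (netgrad l idx act act' \<theta> (Suc k) x i) \<le> M" by blast
  define M2 where "M2 = max (\<rho> + real (l (Suc k)) * (\<rho> * M)) (1 + real (l (Suc k)) * (M + \<rho> * (C * M)))"
  show ?case
  proof (intro exI[of _ M2] allI impI)
    fix act :: "nat \<Rightarrow> real \<Rightarrow> real" and act' :: "nat \<Rightarrow> real \<Rightarrow> real" and \<theta> :: "real^'a" and x i
    assume h: "\<forall>k y. \<bar>act k y\<bar> \<le> \<bar>y\<bar>" "\<forall>k y. \<bar>act' k y\<bar> \<le> C" "norm \<theta> \<le> \<rho>" "\<forall>j\<in>{1..l 0}. \<bar>x j\<bar> \<le> \<beta>"
    note Mh = M[OF h]
    have b1: "\<bar>act (Suc k) (net l idx act \<theta> (Suc k) x j)\<bar> \<le> M" for j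
      using h(1) Mh[of j] by (meson order_trans)
    have b2: "norm (act' (Suc k) (net l idx act \<theta> (Suc k) x j) *\<^sub>R netgrad l idx act act' \<theta> (Suc k) x j) \<le> C * M" for j
      using h(2) Mh[of j] by (auto intro!: mult_mono simp: \<open>0 \<le> C\<close>)
    have "\<bar>affine l idx (Suc (Suc k)) \<theta> (\<lambda>j. act (Suc k) (net l idx act \<theta> (Suc k) x j)) i\<bar> \<le> \<rho> + real (l (Suc (Suc k) - 1)) * (\<rho> * M)"
      using h b1 by (intro affine_bound) auto
    moreover have "norm (affgrad l idx (Suc (Suc k)) \<theta> (\<lambda>j. act (Suc k) (net l idx act \<theta> (Suc k) x j))
         (\<lambda>j. act' (Suc k) (net l idx act \<theta> (Suc k) x j) *\<^sub>R netgrad l idx act act' \<theta> (Suc k) x j) i)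
       \<le> 1 + real (l (Suc (Suc k) - 1)) * (M + \<rho> * (C * M))"
      using h b1 b2 by (intro affgrad_bound) auto
    ultimately show "\<bar>net l idx act \<theta> (Suc (Suc k)) x i\<bar> \<le> M2 \<and> norm (netgrad l idx act act' \<theta> (Suc (Suc k)) x i) \<le> M2"
      unfolding M2_def by (simp add: le_max_iff_disj)
  qed
qed

lemma affine_diff:
  "affine l idx k \<theta> y i - affine l idx k \<theta> y' i = (\<Sum>j=1..l (k - 1). weight l idx k \<theta> i j * (y j - y' j))"
  by (simp add: affine_def sum_subtractf algebra_simps)

lemma affgrad_tendsto:
  assumes "\<And>j. ((\<lambda>r. Y r j) \<longlongrightarrow> Y' j) F" "\<And>j. ((\<lambda>r. dY r j) \<longlongrightarrow> dY' j) F"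
  shows "((\<lambda>r. affgrad l idx k \<theta> (Y r) (dY r) i) \<longlongrightarrow> affgrad l idx k \<theta> Y' dY' i) F"
  unfolding affgrad_def by (intro tendsto_intros assms)

lemma su_conv:
  fixes s u :: "real \<Rightarrow> real"
  assumes s1: "\<forall>\<^sub>F r in at_top. s r \<ge> 1" and su: "((\<lambda>r. s r * \<bar>u r - v\<bar>) \<longlongrightarrow> 0) at_top"
  shows "(u \<longlongrightarrow> v) at_top"
proof -
  have e1: "\<forall>\<^sub>F r in at_top. 0 \<le> \<bar>u r - v\<bar>" by (rule always_eventually) simp
  have e2: "\<forall>\<^sub>F r in at_top. \<bar>u r - v\<bar> \<le> s r * \<bar>u r - v\<bar>"
    using s1
  proof eventually_elim
    case (elim r)
    show ?case using mult_right_mono[OF elim abs_ge_zero[of "u r - v"]] by simp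
  qed
  have "((\<lambda>r. \<bar>u r - v\<bar>) \<longlongrightarrow> 0) at_top"
    by (rule tendsto_sandwich[OF e1 e2 tendsto_const su])
  then have "((\<lambda>r. u r - v) \<longlongrightarrow> 0) at_top" by (rule tendsto_rabs_zero_cancel)
  then show "(u \<longlongrightarrow> v) at_top" by (rule LIM_zero_cancel)
qed

locale Rset =
  fixes R :: "real \<Rightarrow> real \<Rightarrow> real" and A B C :: real
  assumes A0: "0 < A" and AB: "A < B"
    and R_C1: "\<forall>r\<ge>1. R r C1_differentiable_on UNIV"
    and R_low: "\<forall>r\<ge>1. \<forall>x. x \<le> A / r \<longrightarrow> R r x = 0"
    and R_bd: "\<forall>r\<ge>1. \<forall>y. 0 \<le> R r y \<and> R r y \<le> max y 0"
    and R_high: "\<forall>r\<ge>1. \<forall>z. z \<ge> B / r \<longrightarrow> R r z = z"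
    and Cb: "\<forall>r\<ge>1. \<forall>x. \<bar>deriv (R r) x\<bar> \<le> C"
begin

lemma C0: "0 \<le> C" using Cb by (meson abs_ge_zero order_trans order_refl)

lemma R_deriv: "s \<ge> 1 \<Longrightarrow> (R s has_real_derivative deriv (R s) y) (at y)"
  using R_C1 unfolding C1_differentiable_on_eq by (simp add: DERIV_deriv_iff_real_differentiable)

lemma R_deriv_cont: "s \<ge> 1 \<Longrightarrow> continuous_on UNIV (deriv (R s))"
proof -
  assume s: "s \<ge> 1"
  have "vector_derivative (R s) (at x) = deriv (R s) x" for x
    using R_deriv[OF s, of x] by (simp add: has_real_derivative_iff_has_vector_derivative vector_derivative_at)
  then show ?thesis using R_C1 s unfolding C1_differentiable_on_eq by auto
qed

lemma R_lip: "s \<ge> 1 \<Longrightarrow> \<bar>R s u - R s v\<bar> \<le> C * \<bar>u - v\<bar>"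
proof -
  assume s: "s \<ge> 1"
  have "norm (R s u - R s v) \<le> C * norm (u - v)"
    by (rule field_differentiable_bound[where S=UNIV and f'="deriv (R s)"])
       (use R_deriv[OF s] Cb s in \<open>auto intro: has_field_derivative_at_within\<close>)
  then show ?thesis by simp
qed

lemma R_relu: "s \<ge> 1 \<Longrightarrow> \<bar>R s v - relu v\<bar> \<le> B / s"
proof -
  assume s: "s \<ge> 1"
  have Bs: "B / s > 0" using A0 AB s by simp
  show ?thesis
  proof (cases "v \<le> 0")
    case True
    then have "R s v = 0" using R_bd[rule_format, of s v] s by (simp add: max_def)
    then show ?thesis using True Bs by (simp add: relu_def)
  next
    case False
    show ?thesis
    proof (cases "v \<ge> B / s")
      case True
      then show ?thesis using R_high s False Bs by (simp add: relu_def)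
    next
      case False2: False
      have "0 \<le> R s v" "R s v \<le> v" using R_bd s False by (auto simp: max_def split: if_splits)
      then show ?thesis using False False2 by (simp add: relu_def)
    qed
  qed
qed

lemma R_abs: "s \<ge> 1 \<Longrightarrow> \<bar>R s y\<bar> \<le> \<bar>y\<bar>"
  using R_bd[rule_format, of s y] by (cases "y \<ge> 0") (auto simp: max_def)

lemma R_d0: "s \<ge> 1 \<Longrightarrow> u < A / s \<Longrightarrow> deriv (R s) u = 0"
proof -
  assume s: "s \<ge> 1" and u: "u < A / s"
  have "((\<lambda>_. 0) has_real_derivative 0) (at u)" by simp
  then have "(R s has_real_derivative 0) (at u)"
    by (rule has_field_derivative_transform_within_open[where S="{..<A/s}"]) (use u R_low s in auto)
  then show ?thesis using R_deriv[OF s] DERIV_unique by blast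
qed

lemma R_d1: "s \<ge> 1 \<Longrightarrow> u > B / s \<Longrightarrow> deriv (R s) u = 1"
proof -
  assume s: "s \<ge> 1" and u: "u > B / s"
  have "((\<lambda>x. x) has_real_derivative 1) (at u)" by simp
  then have "(R s has_real_derivative 1) (at u)"
    by (rule has_field_derivative_transform_within_open[where S="{B/s<..}"]) (use u R_high s in auto)
  then show ?thesis using R_deriv[OF s] DERIV_unique by blast
qed

lemma deriv_conv:
  fixes s u :: "real \<Rightarrow> real"
  assumes s1: "\<forall>\<^sub>F r in at_top. s r \<ge> 1" and s0: "((\<lambda>r. 1 / s r) \<longlongrightarrow> 0) at_top"
    and su: "((\<lambda>r. s r * \<bar>u r - v\<bar>) \<longlongrightarrow> 0) at_top"
  shows "((\<lambda>r. deriv (R (s r)) (u r)) \<longlongrightarrow> (if v > 0 then 1 else 0)) at_top"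
proof -
  have e1: "\<forall>\<^sub>F r in at_top. 0 \<le> \<bar>u r - v\<bar>" by (rule always_eventually) simp
  have e2: "\<forall>\<^sub>F r in at_top. \<bar>u r - v\<bar> \<le> s r * \<bar>u r - v\<bar>"
    using s1
  proof eventually_elim
    case (elim r)
    show ?case using mult_right_mono[OF elim abs_ge_zero[of "u r - v"]] by simp
  qed
  have "((\<lambda>r. \<bar>u r - v\<bar>) \<longlongrightarrow> 0) at_top"
    by (rule tendsto_sandwich[OF e1 e2 tendsto_const su])
  then have "((\<lambda>r. u r - v) \<longlongrightarrow> 0) at_top" by (rule tendsto_rabs_zero_cancel)
  then have uv: "(u \<longlongrightarrow> v) at_top" by (rule LIM_zero_cancel)
  have Bs: "((\<lambda>r. B * (1 / s r)) \<longlongrightarrow> 0) at_top" using tendsto_mult_right_zero[OF s0] by simp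
  show ?thesis
  proof (cases "v > 0")
    case True
    have "\<forall>\<^sub>F r in at_top. u r > v / 2" using uv by (rule order_tendstoD(1)) (use True in simp)
    moreover have "\<forall>\<^sub>F r in at_top. B * (1 / s r) < v / 2" using Bs by (rule order_tendstoD(2)) (use True in simp)
    ultimately have "\<forall>\<^sub>F r in at_top. deriv (R (s r)) (u r) = 1"
      using s1
    proof eventually_elim
      case (elim r)
      have "B * (1 / s r) < u r" using elim(1,2) by linarith
      then have "B / s r < u r" by simp
      then show ?case by (rule R_d1[rotated]) (use elim in simp)
    qed
    then show ?thesis using True by (simp add: tendsto_eventually)
  next
    case False
    have "\<forall>\<^sub>F r in at_top. u r < A / s r"
    proof (cases "v < 0")
      case True
      have "\<forall>\<^sub>F r in at_top. u r < 0" using uv by (rule order_tendstoD(2)) (use True in simp)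
      then show ?thesis using s1
      proof eventually_elim
        case (elim r)
        have "0 < A / s r" using A0 elim(2) by simp
        then show ?case using elim(1) by linarith
      qed
    next
      case False2: False
      then have "v = 0" using False by simp
      have "\<forall>\<^sub>F r in at_top. s r * \<bar>u r - v\<bar> < A" using su by (rule order_tendstoD(2)) (use A0 in simp)
      then show ?thesis using s1
      proof eventually_elim
        case (elim r)
        have "s r * u r < A" using elim(1) \<open>v = 0\<close> abs_ge_self[of "u r"] elim(2)
          by (smt (verit) mult_left_mono)
        then show ?case using elim(2) by (simp add: pos_less_divide_eq mult.commute)
      qed
    qed
    then have "\<forall>\<^sub>F r in at_top. deriv (R (s r)) (u r) = 0"
      using s1
    proof eventually_elim
      case (elim r)
      show ?case by (rule R_d0) (use elim in simp_all)
    qed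
    then show ?thesis using False by (simp add: tendsto_eventually)
  qed
qed

lemma R_conv:
  fixes s u :: "real \<Rightarrow> real"
  assumes s1: "\<forall>\<^sub>F r in at_top. s r \<ge> 1" and s0: "((\<lambda>r. 1 / s r) \<longlongrightarrow> 0) at_top"
    and su: "((\<lambda>r. s r * \<bar>u r - v\<bar>) \<longlongrightarrow> 0) at_top"
  shows "((\<lambda>r. R (s r) (u r)) \<longlongrightarrow> relu v) at_top"
proof -
  have uv: "(u \<longlongrightarrow> v) at_top" by (rule su_conv[OF s1 su])
  then have "((\<lambda>r. u r - v) \<longlongrightarrow> 0) at_top" by (rule LIM_zero)
  then have "((\<lambda>r. \<bar>u r - v\<bar>) \<longlongrightarrow> 0) at_top" by (rule tendsto_rabs_zero)
  then have lim: "((\<lambda>r. C * \<bar>u r - v\<bar> + B * (1 / s r)) \<longlongrightarrow> 0) at_top"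
    using tendsto_add[OF tendsto_mult_right_zero tendsto_mult_right_zero[OF s0]] by simp
  have e1: "\<forall>\<^sub>F r in at_top. 0 \<le> \<bar>R (s r) (u r) - relu v\<bar>" by (rule always_eventually) simp
  have e2: "\<forall>\<^sub>F r in at_top. \<bar>R (s r) (u r) - relu v\<bar> \<le> C * \<bar>u r - v\<bar> + B * (1 / s r)"
    using s1
  proof eventually_elim
    case (elim r)
    have "\<bar>R (s r) (u r) - relu v\<bar> \<le> \<bar>R (s r) (u r) - R (s r) v\<bar> + \<bar>R (s r) v - relu v\<bar>" by linarith
    also have "\<dots> \<le> C * \<bar>u r - v\<bar> + B / s r" using R_lip[OF elim] R_relu[OF elim] by (rule add_mono)
    finally show ?case by simp
  qed
  have "((\<lambda>r. \<bar>R (s r) (u r) - relu v\<bar>) \<longlongrightarrow> 0) at_top"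
    by (rule tendsto_sandwich[OF e1 e2 tendsto_const lim])
  then have "((\<lambda>r. R (s r) (u r) - relu v) \<longlongrightarrow> 0) at_top" by (rule tendsto_rabs_zero_cancel)
  then show ?thesis by (rule LIM_zero_cancel)
qed

end

lemma powr_ge1: "r \<ge> 1 \<Longrightarrow> (r::real) powr (1 / real k) \<ge> 1"
  by (rule ge_one_powr_ge_zero) auto

lemma inv_powr_tendsto: "((\<lambda>r::real. 1 / r powr (1 / real (Suc k))) \<longlongrightarrow> 0) at_top"
proof -
  have "((\<lambda>r::real. r powr (- (1 / real (Suc k)))) \<longlongrightarrow> 0) at_top"
    by (rule tendsto_neg_powr) (auto simp: filterlim_ident)
  moreover have "\<forall>\<^sub>F r in at_top. r powr (- (1 / real (Suc k))) = 1 / (r::real) powr (1 / real (Suc k))"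
    using eventually_gt_at_top[of 0] by eventually_elim (simp add: powr_minus_divide)
  ultimately show ?thesis by (rule Lim_transform_eventually)
qed

lemma ratio_powr_tendsto: "((\<lambda>r::real. r powr (1 / real (Suc (Suc k))) / r powr (1 / real (Suc k))) \<longlongrightarrow> 0) at_top"
proof -
  have "1 / real (Suc (Suc k)) < 1 / real (Suc k)" by (intro divide_strict_left_mono) auto
  then have neg: "1 / real (Suc (Suc k)) - 1 / real (Suc k) < 0" by linarith
  have "((\<lambda>r::real. r powr (1 / real (Suc (Suc k)) - 1 / real (Suc k))) \<longlongrightarrow> 0) at_top"
    by (rule tendsto_neg_powr[OF neg]) (auto simp: filterlim_ident)
  moreover have "\<forall>\<^sub>F r in at_top. r powr (1 / real (Suc (Suc k)) - 1 / real (Suc k)) = (r::real) powr (1 / real (Suc (Suc k))) / r powr (1 / real (Suc k))"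
    using eventually_gt_at_top[of 0] by eventually_elim (simp add: powr_diff)
  ultimately show ?thesis by (rule Lim_transform_eventually)
qed

context Rset
begin

lemma conv_net:
  "((\<lambda>r. r powr (1 / real k) * \<bar>net l idx (act_r R r) \<theta> k x i - net l idx (\<lambda>_. relu) \<theta> k x i\<bar>) \<longlongrightarrow> 0) at_top"
proof (induction k arbitrary: i rule: nat_less_induct)
  case (1 n)
  show ?case
  proof (cases n)
    case 0 then show ?thesis by simp
  next
    case (Suc m)
    show ?thesis
    proof (cases m)
      case 0
      then show ?thesis using Suc by simp
    next
      case (Suc k)
      define s where "s r = r powr (1 / real (Suc k))" for r :: real
      define \<tau> where "\<tau> r = r powr (1 / real (Suc (Suc k)))" for r :: real
      define u where "u j r = net l idx (act_r R r) \<theta> (Suc k) x j" for j r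
      define v where "v j = net l idx (\<lambda>_. relu) \<theta> (Suc k) x j" for j
      define W where "W j = \<bar>weight l idx (Suc (Suc k)) \<theta> i j\<bar>" for j
      have IH: "((\<lambda>r. s r * \<bar>u j r - v j\<bar>) \<longlongrightarrow> 0) at_top" for j
        using 1 \<open>n = Suc m\<close> Suc unfolding s_def u_def v_def by auto
      have diff: "net l idx (act_r R r) \<theta> n x i - net l idx (\<lambda>_. relu) \<theta> n x i
          = (\<Sum>j=1..l (Suc k). weight l idx (Suc (Suc k)) \<theta> i j * (R (s r) (u j r) - relu (v j)))" for r
        using \<open>n = Suc m\<close> Suc by (simp add: affine_diff s_def u_def v_def act_r_def)
      have bound: "\<tau> r * \<bar>net l idx (act_r R r) \<theta> n x i - net l idx (\<lambda>_. relu) \<theta> n x i\<bar>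
          \<le> (\<Sum>j=1..l (Suc k). W j * (C * (s r * \<bar>u j r - v j\<bar>) + B * (\<tau> r / s r)))" if r: "r \<ge> 1" for r
      proof -
        have s1: "s r \<ge> 1" unfolding s_def using r by (rule powr_ge1)
        have t1: "\<tau> r \<ge> 1" unfolding \<tau>_def using r by (rule powr_ge1)
        have ts: "\<tau> r \<le> s r" unfolding \<tau>_def s_def using r by (intro powr_mono) (auto simp: field_simps)
        have "\<tau> r * \<bar>net l idx (act_r R r) \<theta> n x i - net l idx (\<lambda>_. relu) \<theta> n x i\<bar>
            \<le> \<tau> r * (\<Sum>j=1..l (Suc k). W j * \<bar>R (s r) (u j r) - relu (v j)\<bar>)"
          unfolding diff W_def using t1 by (intro mult_left_mono order_trans[OF sum_abs]) (auto simp: abs_mult)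
        also have "\<dots> = (\<Sum>j=1..l (Suc k). W j * (\<tau> r * \<bar>R (s r) (u j r) - relu (v j)\<bar>))"
          by (simp add: sum_distrib_left algebra_simps)
        also have "\<dots> \<le> (\<Sum>j=1..l (Suc k). W j * (C * (s r * \<bar>u j r - v j\<bar>) + B * (\<tau> r / s r)))"
        proof (intro sum_mono mult_left_mono)
          fix j
          have "\<bar>R (s r) (u j r) - relu (v j)\<bar> \<le> \<bar>R (s r) (u j r) - R (s r) (v j)\<bar> + \<bar>R (s r) (v j) - relu (v j)\<bar>" by linarith
          also have "\<dots> \<le> C * \<bar>u j r - v j\<bar> + B / s r" using R_lip[OF s1] R_relu[OF s1] by (rule add_mono)
          finally have "\<tau> r * \<bar>R (s r) (u j r) - relu (v j)\<bar> \<le> \<tau> r * (C * \<bar>u j r - v j\<bar> + B / s r)"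
            using t1 by (intro mult_left_mono) auto
          also have "\<dots> = C * (\<tau> r * \<bar>u j r - v j\<bar>) + B * (\<tau> r / s r)" by (simp add: algebra_simps)
          also have "\<dots> \<le> C * (s r * \<bar>u j r - v j\<bar>) + B * (\<tau> r / s r)"
            using ts C0 A0 AB by (intro add_mono mult_left_mono mult_right_mono) auto
          finally show "\<tau> r * \<bar>R (s r) (u j r) - relu (v j)\<bar> \<le> C * (s r * \<bar>u j r - v j\<bar>) + B * (\<tau> r / s r)" .
        qed (simp add: W_def)
        finally show ?thesis .
      qed
      have lim: "((\<lambda>r. (\<Sum>j=1..l (Suc k). W j * (C * (s r * \<bar>u j r - v j\<bar>) + B * (\<tau> r / s r)))) \<longlongrightarrow> 0) at_top"
      proof -
        have "((\<lambda>r. \<tau> r / s r) \<longlongrightarrow> 0) at_top" unfolding \<tau>_def s_def by (rule ratio_powr_tendsto)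
        then have "((\<lambda>r. (\<Sum>j=1..l (Suc k). W j * (C * (s r * \<bar>u j r - v j\<bar>) + B * (\<tau> r / s r)))) \<longlongrightarrow>
                   (\<Sum>j=1..l (Suc k). W j * (C * 0 + B * 0))) at_top"
          by (intro tendsto_intros IH)
        then show ?thesis by simp
      qed
      have "((\<lambda>r. \<tau> r * \<bar>net l idx (act_r R r) \<theta> n x i - net l idx (\<lambda>_. relu) \<theta> n x i\<bar>) \<longlongrightarrow> 0) at_top"
      proof (rule tendsto_sandwich[OF _ _ tendsto_const lim])
        show "\<forall>\<^sub>F r in at_top. 0 \<le> \<tau> r * \<bar>net l idx (act_r R r) \<theta> n x i - net l idx (\<lambda>_. relu) \<theta> n x i\<bar>"
          using eventually_ge_at_top[of 1]
          by eventually_elim (use powr_ge1 in \<open>auto simp: \<tau>_def\<close>)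
        show "\<forall>\<^sub>F r in at_top. \<tau> r * \<bar>net l idx (act_r R r) \<theta> n x i - net l idx (\<lambda>_. relu) \<theta> n x i\<bar>
           \<le> (\<Sum>j=1..l (Suc k). W j * (C * (s r * \<bar>u j r - v j\<bar>) + B * (\<tau> r / s r)))"
          using eventually_ge_at_top[of 1] by eventually_elim (rule bound)
      qed
      then show ?thesis using \<open>n = Suc m\<close> Suc unfolding \<tau>_def by simp
    qed
  qed
qed

lemma conv_net_plain:
  "((\<lambda>r. net l idx (act_r R r) \<theta> k x i) \<longlongrightarrow> net l idx (\<lambda>_. relu) \<theta> k x i) at_top"
proof (rule su_conv[OF _ conv_net])
  show "\<forall>\<^sub>F r in at_top. 1 \<le> r powr (1 / real k)"
    using eventually_ge_at_top[of "1::real"] by eventually_elim (rule powr_ge1)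
qed

lemma conv_grad:
  "((\<lambda>r. netgrad l idx (act_r R r) (\<lambda>k. deriv (R (r powr (1 / real k)))) \<theta> k x i) \<longlongrightarrow>
      netgrad l idx (\<lambda>_. relu) (\<lambda>_ y. if y > 0 then 1 else 0) \<theta> k x i) at_top"
proof (induction k arbitrary: i rule: nat_less_induct)
  case (1 n)
  show ?case
  proof (cases n)
    case 0 then show ?thesis by simp
  next
    case (Suc m)
    show ?thesis
    proof (cases m)
      case 0
      then show ?thesis using Suc by simp
    next
      case (Suc k)
      define s where "s r = r powr (1 / real (Suc k))" for r :: real
      have s1: "\<forall>\<^sub>F r in at_top. s r \<ge> 1"
        using eventually_ge_at_top[of 1] by eventually_elim (unfold s_def, rule powr_ge1)
      have s0: "((\<lambda>r. 1 / s r) \<longlongrightarrow> 0) at_top" unfolding s_def by (rule inv_powr_tendsto)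
      have IH: "((\<lambda>r. netgrad l idx (act_r R r) (\<lambda>k. deriv (R (r powr (1 / real k)))) \<theta> (Suc k) x j) \<longlongrightarrow>
          netgrad l idx (\<lambda>_. relu) (\<lambda>_ y. if y > 0 then 1 else 0) \<theta> (Suc k) x j) at_top" for j
        using 1 \<open>n = Suc m\<close> Suc by auto
      have cn: "((\<lambda>r. s r * \<bar>net l idx (act_r R r) \<theta> (Suc k) x j - net l idx (\<lambda>_. relu) \<theta> (Suc k) x j\<bar>) \<longlongrightarrow> 0) at_top" for j
        unfolding s_def by (rule conv_net)
      have Y: "((\<lambda>r. R (s r) (net l idx (act_r R r) \<theta> (Suc k) x j)) \<longlongrightarrow> relu (net l idx (\<lambda>_. relu) \<theta> (Suc k) x j)) at_top" for j
        by (rule R_conv[OF s1 s0 cn])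
      have D: "((\<lambda>r. deriv (R (s r)) (net l idx (act_r R r) \<theta> (Suc k) x j)) \<longlongrightarrow>
           (if net l idx (\<lambda>_. relu) \<theta> (Suc k) x j > 0 then 1 else 0)) at_top" for j
        by (rule deriv_conv[OF s1 s0 cn])
      show ?thesis using \<open>n = Suc m\<close> Suc
        apply simp
        apply (rule affgrad_tendsto)
        using Y apply (simp add: act_r_def s_def)
        apply (rule tendsto_scaleR[OF _ IH])
        using D apply (simp add: s_def)
        done
    qed
  qed
qed

end

locale NetSet = Rset R A B C for R A B C +
  fixes l :: "nat \<Rightarrow> nat" and idx :: "nat \<Rightarrow> 'd::finite" and L :: nat
    and \<mu> :: "(nat \<Rightarrow> real) measure" and f :: "(nat \<Rightarrow> real) \<Rightarrow> (nat \<Rightarrow> real)" and a b :: real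
  assumes L_pos: "L \<ge> 1"
    and mu_sets: "sets \<mu> = sets (PiM {1..l 0} (\<lambda>_. restrict_space borel {a..b}))"
    and mu_fin: "emeasure \<mu> (space \<mu>) < \<infinity>"
    and f_meas: "\<forall>i\<in>{1..l L}. (\<lambda>x. f x i) \<in> borel_measurable \<mu>"
    and integrable_r: "\<forall>r\<ge>1. \<forall>\<theta>. integrable \<mu>
        (\<lambda>x. \<Sum>i=1..l L. (net l idx (act_r R r) \<theta> L x i - f x i)\<^sup>2)"
    and integrable_inf: "\<forall>\<theta>. integrable \<mu>
        (\<lambda>x. \<Sum>i=1..l L. (net l idx (\<lambda>_. relu) \<theta> L x i - f x i)\<^sup>2)"
begin

definition "dR r = (\<lambda>k. deriv (R (r powr (1 / real k))))"
definition "di = (\<lambda>(_::nat) (y::real). if y > 0 then 1 else (0::real))"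
definition "\<beta> = max \<bar>a\<bar> \<bar>b\<bar>"
definition "S x = (\<Sum>i=1..l L. (f x i)\<^sup>2)"

definition "hh act \<theta> x = (\<Sum>i=1..l L. (net l idx act \<theta> L x i - f x i)\<^sup>2)"
definition "DD act act' \<theta> x = (\<Sum>i=1..l L. (2 * (net l idx act \<theta> L x i - f x i)) *\<^sub>R netgrad l idx act act' \<theta> L x i)"

lemma fin: "finite_measure \<mu>" using mu_fin by (intro finite_measureI) simp

lemma space_mu: "x \<in> space \<mu> \<Longrightarrow> j \<in> {1..l 0} \<Longrightarrow> \<bar>x j\<bar> \<le> \<beta>"
proof -
  assume x: "x \<in> space \<mu>" and j: "j \<in> {1..l 0}"
  have "space \<mu> = space (PiM {1..l 0} (\<lambda>_. restrict_space borel {a..b}))" by (rule sets_eq_imp_space_eq[OF mu_sets])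
  then have "x j \<in> {a..b}" using x j by (auto simp: space_PiM PiE_iff space_restrict_space)
  then show ?thesis unfolding \<beta>_def by auto
qed

lemma meas_coord: "j \<in> {1..l 0} \<Longrightarrow> (\<lambda>x. x j) \<in> borel_measurable \<mu>"
proof -
  assume j: "j \<in> {1..l 0}"
  have "(\<lambda>x. x j) \<in> PiM {1..l 0} (\<lambda>_. restrict_space borel {a..b}) \<rightarrow>\<^sub>M restrict_space borel {a..b}"
    using measurable_component_singleton[OF j, of "\<lambda>_. restrict_space borel {a..b}"] by simp
  then have "(\<lambda>x. x j) \<in> PiM {1..l 0} (\<lambda>_. restrict_space borel {a..b}) \<rightarrow>\<^sub>M borel"
    by (simp add: measurable_restrict_space2_iff)
  then show ?thesis by (subst measurable_cong_sets[OF mu_sets refl])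
qed

lemma net_zero: "k \<ge> 1 \<Longrightarrow> net l idx act 0 k x i = 0"
  by (cases k rule: nat.exhaust; cases "k - 1" rule: nat.exhaust) (auto simp: affine_def bias_def weight_def)

lemma S_int: "integrable \<mu> S"
proof -
  have "S = (\<lambda>x. \<Sum>i=1..l L. (net l idx (\<lambda>_. relu) 0 L x i - f x i)\<^sup>2)"
    using L_pos by (intro ext) (simp add: net_zero S_def)
  then show ?thesis using integrable_inf by simp
qed

lemma S_nonneg: "0 \<le> S x" unfolding S_def by (intro sum_nonneg) auto

lemma f_le_S: "i \<in> {1..l L} \<Longrightarrow> \<bar>f x i\<bar> \<le> 1 + S x"
proof -
  assume i: "i \<in> {1..l L}"
  have "(f x i)\<^sup>2 \<le> S x" unfolding S_def by (rule member_le_sum[OF i]) auto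
  moreover have "\<bar>f x i\<bar> \<le> 1 + (f x i)\<^sup>2"
  proof -
    have "0 \<le> (\<bar>f x i\<bar> - 1)\<^sup>2" by simp
    also have "(\<bar>f x i\<bar> - 1)\<^sup>2 = (f x i)\<^sup>2 - 2 * \<bar>f x i\<bar> + 1"
      by (simp add: power2_eq_square algebra_simps abs_mult_self_eq)
    finally show ?thesis using zero_le_power2[of "f x i"] by linarith
  qed
  ultimately show ?thesis by linarith
qed

lemma aR_props:
  assumes r: "r \<ge> 1"
  shows "\<forall>k y. \<bar>act_r R r k y\<bar> \<le> \<bar>y\<bar>" "\<forall>k y. \<bar>dR r k y\<bar> \<le> max C 1"
    "\<And>k y. (act_r R r k has_real_derivative dR r k y) (at y)"
    "\<And>k. continuous_on UNIV (dR r k)"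
    "\<And>k. act_r R r k \<in> borel_measurable borel" "\<And>k. dR r k \<in> borel_measurable borel"
proof -
  have s: "r powr (1 / real k) \<ge> 1" for k using r by (rule powr_ge1)
  show "\<forall>k y. \<bar>act_r R r k y\<bar> \<le> \<bar>y\<bar>" using R_abs[OF s] by (simp add: act_r_def)
  show "\<forall>k y. \<bar>dR r k y\<bar> \<le> max C 1" using Cb s unfolding dR_def by (meson max.coboundedI1)
  show d: "(act_r R r k has_real_derivative dR r k y) (at y)" for k y
    using R_deriv[OF s] by (simp add: act_r_def dR_def)
  show c: "continuous_on UNIV (dR r k)" for k using R_deriv_cont[OF s] by (simp add: dR_def)
  show "act_r R r k \<in> borel_measurable borel" for k
  proof (rule borel_measurable_continuous_onI)
    show "continuous_on UNIV (act_r R r k)"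
      unfolding continuous_on_eq_continuous_at[OF open_UNIV] using DERIV_isCont[OF d] by blast
  qed
  show "dR r k \<in> borel_measurable borel" for k by (rule borel_measurable_continuous_onI[OF c])
qed

lemma ai_props:
  shows "\<forall>k y. \<bar>relu y\<bar> \<le> \<bar>y\<bar>" "\<forall>k y. \<bar>di k y\<bar> \<le> max C 1"
    "\<And>k. (\<lambda>_::nat. relu) k \<in> borel_measurable borel" "\<And>k. di k \<in> borel_measurable borel"
  unfolding relu_def[abs_def] di_def by (auto simp: relu_def di_def) measurable

lemma Lsuc: "L = Suc (L - 1)" using L_pos by simp

lemma bnd:
  "\<exists>M\<ge>0. \<forall>\<theta> x i act act'. (\<forall>k y. \<bar>act k y\<bar> \<le> \<bar>y\<bar>) \<longrightarrow> (\<forall>k y. \<bar>act' k y\<bar> \<le> max C 1) \<longrightarrow>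
      norm \<theta> \<le> \<rho> \<longrightarrow> x \<in> space \<mu> \<longrightarrow>
      \<bar>net l idx act \<theta> L x i\<bar> \<le> M \<and> norm (netgrad l idx act act' \<theta> L x i) \<le> M"
proof -
  obtain M where M: "\<forall>act act' \<theta> x i. (\<forall>k y. \<bar>act k y\<bar> \<le> \<bar>y\<bar>) \<longrightarrow> (\<forall>k y. \<bar>act' k y\<bar> \<le> max C 1) \<longrightarrow> norm \<theta> \<le> max \<rho> 0 \<longrightarrow>
     (\<forall>j\<in>{1..l 0}. \<bar>x j\<bar> \<le> \<beta>) \<longrightarrow>
     \<bar>net l idx act \<theta> (Suc (L - 1)) x i\<bar> \<le> M \<and> norm (netgrad l idx act act' \<theta> (Suc (L - 1)) x i) \<le> M"
  proof -
    have "0 \<le> max \<rho> 0" "0 \<le> max C 1" by auto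
    from net_bounds[OF this, where l=l and idx=idx and \<beta>=\<beta> and k="L - 1"] that show ?thesis by blast
  qed
  show ?thesis
  proof (intro exI[of _ "max M 0"] conjI allI impI)
    fix \<theta> :: "real^'d" and x i and act act' :: "nat \<Rightarrow> real \<Rightarrow> real"
    assume h: "\<forall>k y. \<bar>act k y\<bar> \<le> \<bar>y\<bar>" "\<forall>k y. \<bar>act' k y\<bar> \<le> max C 1" "norm \<theta> \<le> \<rho>" "x \<in> space \<mu>"
    have "\<bar>net l idx act \<theta> (Suc (L - 1)) x i\<bar> \<le> M \<and> norm (netgrad l idx act act' \<theta> (Suc (L - 1)) x i) \<le> M"
      using M h space_mu by auto
    then show "\<bar>net l idx act \<theta> L x i\<bar> \<le> max M 0" "norm (netgrad l idx act act' \<theta> L x i) \<le> max M 0"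
      using Lsuc by (metis max.coboundedI1)+
  qed simp
qed

lemma DD_bound:
  assumes M: "\<And>i. \<bar>net l idx act \<theta> L x i\<bar> \<le> M \<and> norm (netgrad l idx act act' \<theta> L x i) \<le> M" and M0: "M \<ge> 0"
  shows "norm (DD act act' \<theta> x) \<le> 2 * real (l L) * M * (M + 1 + S x)"
proof -
  have "norm (DD act act' \<theta> x) \<le> (\<Sum>i=1..l L. norm ((2 * (net l idx act \<theta> L x i - f x i)) *\<^sub>R netgrad l idx act act' \<theta> L x i))"
    unfolding DD_def by (rule norm_sum)
  also have "\<dots> \<le> (\<Sum>i=1..l L. 2 * (M + 1 + S x) * M)"
  proof (rule sum_mono)
    fix i assume i: "i \<in> {1..l L}"
    have "\<bar>net l idx act \<theta> L x i - f x i\<bar> \<le> M + 1 + S x" using M[of i] f_le_S[OF i, of x] by linarith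
    then show "norm ((2 * (net l idx act \<theta> L x i - f x i)) *\<^sub>R netgrad l idx act act' \<theta> L x i) \<le> 2 * (M + 1 + S x) * M"
      using M[of i] by (auto intro!: mult_mono simp: abs_mult)
  qed
  finally show ?thesis by (simp add: algebra_simps)
qed

lemma hh_bound:
  assumes M: "\<And>i. \<bar>net l idx act \<theta> L x i\<bar> \<le> M"
  shows "norm (hh act \<theta> x) \<le> 2 * real (l L) * M\<^sup>2 + 2 * S x"
proof -
  have "norm (hh act \<theta> x) = (\<Sum>i=1..l L. (net l idx act \<theta> L x i - f x i)\<^sup>2)"
    unfolding hh_def by (simp add: sum_nonneg)
  also have "\<dots> \<le> (\<Sum>i=1..l L. 2 * M\<^sup>2 + 2 * (f x i)\<^sup>2)"
  proof (rule sum_mono)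
    fix i
    have "(net l idx act \<theta> L x i - f x i)\<^sup>2 \<le> 2 * (net l idx act \<theta> L x i)\<^sup>2 + 2 * (f x i)\<^sup>2"
      using zero_le_power2[of "net l idx act \<theta> L x i + f x i"] by (simp add: power2_eq_square algebra_simps)
    moreover have "\<bar>net l idx act \<theta> L x i\<bar>\<^sup>2 \<le> M\<^sup>2" by (rule power_mono[OF M[of i] abs_ge_zero])
    ultimately show "(net l idx act \<theta> L x i - f x i)\<^sup>2 \<le> 2 * M\<^sup>2 + 2 * (f x i)\<^sup>2" by simp
  qed
  also have "\<dots> = 2 * real (l L) * M\<^sup>2 + 2 * S x" by (simp add: sum.distrib S_def sum_distrib_left)
  finally show ?thesis .
qed

lemma meas_hh_DD:
  assumes "\<And>k. act k \<in> borel_measurable borel" "\<And>k. act' k \<in> borel_measurable borel"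
  shows "hh act \<theta> \<in> borel_measurable \<mu>" "DD act act' \<theta> \<in> borel_measurable \<mu>"
proof -
  have m: "(\<lambda>x. net l idx act \<theta> L x i) \<in> borel_measurable \<mu>" "(\<lambda>x. netgrad l idx act act' \<theta> L x i) \<in> borel_measurable \<mu>" for i
    using net_meas[OF assms meas_coord, where \<theta>=\<theta> and k="L - 1" and i=i] Lsuc by auto
  show "hh act \<theta> \<in> borel_measurable \<mu>" unfolding hh_def[abs_def]
    using m f_meas by (intro borel_measurable_sum borel_measurable_power borel_measurable_diff) auto
  show "DD act act' \<theta> \<in> borel_measurable \<mu>" unfolding DD_def[abs_def]
    using m f_meas by (intro borel_measurable_sum borel_measurable_scaleR borel_measurable_times borel_measurable_diff borel_measurable_const) auto
qed

lemma hh_deriv: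
  assumes act: "\<And>k y. (act k has_real_derivative act' k y) (at y)"
  shows "((\<lambda>\<theta>. hh act \<theta> x) has_derivative (\<lambda>h. DD act act' \<theta>0 x \<bullet> h)) (at \<theta>0)"
proof -
  have "((\<lambda>\<theta>. (net l idx act \<theta> L x i - f x i)\<^sup>2) has_derivative
        (\<lambda>h. ((2 * (net l idx act \<theta>0 L x i - f x i)) *\<^sub>R netgrad l idx act act' \<theta>0 L x i) \<bullet> h)) (at \<theta>0)" for i
    apply (rule has_derivative_eq_rhs)
     apply (rule has_derivative_power[OF has_derivative_diff[OF netgrad_has_derivative[OF act] has_derivative_const]])
    apply (simp add: algebra_simps)
    done
  then show ?thesis unfolding hh_def DD_def
    by (rule has_derivative_eq_rhs[OF has_derivative_sum]) (simp add: inner_sum_left)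
qed

end

context NetSet
begin

lemma risk_eq: "risk l idx L act \<mu> f = (\<lambda>\<theta>. \<integral>x. hh act \<theta> x \<partial>\<mu>)"
  by (simp add: risk_def[abs_def] hh_def[abs_def])

lemma int_const: "integrable \<mu> (\<lambda>x. c :: real)"
  by (rule finite_measure.integrable_const[OF fin])

lemma DD_dom: "\<exists>w. integrable \<mu> w \<and> (\<forall>\<theta> x act act'. (\<forall>k y. \<bar>act k y\<bar> \<le> \<bar>y\<bar>) \<longrightarrow> (\<forall>k y. \<bar>act' k y\<bar> \<le> max C 1) \<longrightarrow>
     norm \<theta> \<le> \<rho> \<longrightarrow> x \<in> space \<mu> \<longrightarrow> norm (DD act act' \<theta> x) \<le> w x)"
proof -
  obtain M where M0: "M \<ge> 0" and M1: "\<forall>\<theta> x i act act'. (\<forall>k y. \<bar>act k y\<bar> \<le> \<bar>y\<bar>) \<longrightarrow> (\<forall>k y. \<bar>act' k y\<bar> \<le> max C 1) \<longrightarrow>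
      norm \<theta> \<le> \<rho> \<longrightarrow> x \<in> space \<mu> \<longrightarrow>
      \<bar>net l idx act \<theta> L x i\<bar> \<le> M \<and> norm (netgrad l idx act act' \<theta> L x i) \<le> M"
    using bnd[of \<rho>] by (elim exE conjE)
  note M = M0 M1[rule_format]
  show ?thesis
  proof (intro exI[of _ "\<lambda>x. 2 * real (l L) * M * (M + 1 + S x)"] conjI allI impI)
    show "integrable \<mu> (\<lambda>x. 2 * real (l L) * M * (M + 1 + S x))"
      by (intro integrable_mult_right Bochner_Integration.integrable_add int_const S_int)
    fix \<theta> :: "real^'d" and x and act act' :: "nat \<Rightarrow> real \<Rightarrow> real"
    assume "\<forall>k y. \<bar>act k y\<bar> \<le> \<bar>y\<bar>" "\<forall>k y. \<bar>act' k y\<bar> \<le> max C 1" "norm \<theta> \<le> \<rho>" "x \<in> space \<mu>"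
    then have "\<And>i. \<bar>net l idx act \<theta> L x i\<bar> \<le> M \<and> norm (netgrad l idx act act' \<theta> L x i) \<le> M"
      using M(2) by blast
    then show "norm (DD act act' \<theta> x) \<le> 2 * real (l L) * M * (M + 1 + S x)"
      by (rule DD_bound[OF _ M(1)])
  qed
qed

lemma hh_dom: "\<exists>w. integrable \<mu> w \<and> (\<forall>\<theta> x act. (\<forall>k y. \<bar>act k y\<bar> \<le> \<bar>y\<bar>) \<longrightarrow>
     norm \<theta> \<le> \<rho> \<longrightarrow> x \<in> space \<mu> \<longrightarrow> norm (hh act \<theta> x) \<le> w x)"
proof -
  obtain M where M0: "M \<ge> 0" and M1: "\<forall>\<theta> x i act act'. (\<forall>k y. \<bar>act k y\<bar> \<le> \<bar>y\<bar>) \<longrightarrow> (\<forall>k y. \<bar>act' k y\<bar> \<le> max C 1) \<longrightarrow>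
      norm \<theta> \<le> \<rho> \<longrightarrow> x \<in> space \<mu> \<longrightarrow>
      \<bar>net l idx act \<theta> L x i\<bar> \<le> M \<and> norm (netgrad l idx act act' \<theta> L x i) \<le> M"
    using bnd[of \<rho>] by (elim exE conjE)
  note M = M0 M1[rule_format]
  show ?thesis
  proof (intro exI[of _ "\<lambda>x. 2 * real (l L) * M\<^sup>2 + 2 * S x"] conjI allI impI)
    have "integrable \<mu> (\<lambda>x. 2 * S x)" by (rule integrable_mult_right[OF S_int])
    then show "integrable \<mu> (\<lambda>x. 2 * real (l L) * M\<^sup>2 + 2 * S x)"
      by (rule Bochner_Integration.integrable_add[OF int_const])
    fix \<theta> :: "real^'d" and x and act :: "nat \<Rightarrow> real \<Rightarrow> real"
    assume h: "\<forall>k y. \<bar>act k y\<bar> \<le> \<bar>y\<bar>" "norm \<theta> \<le> \<rho>" "x \<in> space \<mu>"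
    have z: "\<And>k y. \<bar>(\<lambda>_ _. 0::real) k y\<bar> \<le> max C 1" by simp
    have "\<And>i. \<bar>net l idx act \<theta> L x i\<bar> \<le> M"
      using M(2)[where act=act and act'="\<lambda>_ _. 0", OF h(1)[rule_format] z h(2,3)] by blast
    then show "norm (hh act \<theta> x) \<le> 2 * real (l L) * M\<^sup>2 + 2 * S x"
      by (rule hh_bound)
  qed
qed

lemma DD_int:
  assumes "\<forall>k y. \<bar>act k y\<bar> \<le> \<bar>y\<bar>" "\<forall>k y. \<bar>act' k y\<bar> \<le> max C 1"
    "\<And>k. act k \<in> borel_measurable borel" "\<And>k. act' k \<in> borel_measurable borel"
  shows "integrable \<mu> (DD act act' \<theta>)"
proof -
  obtain w where w1: "integrable \<mu> w" and w2: "\<forall>\<theta>' x act act'. (\<forall>k y. \<bar>act k y\<bar> \<le> \<bar>y\<bar>) \<longrightarrow> (\<forall>k y. \<bar>act' k y\<bar> \<le> max C 1) \<longrightarrow>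
     norm \<theta>' \<le> norm \<theta> \<longrightarrow> x \<in> space \<mu> \<longrightarrow> norm (DD act act' \<theta>' x) \<le> w x"
    using DD_dom[of "norm \<theta>"] by (elim exE conjE)
  have w: "integrable \<mu> w" "\<And>x. x \<in> space \<mu> \<Longrightarrow> norm (DD act act' \<theta> x) \<le> w x"
    using w1 w2[rule_format, OF assms(1,2)[rule_format] order_refl] by auto
  show ?thesis
  proof (rule Bochner_Integration.integrable_bound[OF w(1)])
    show "DD act act' \<theta> \<in> borel_measurable \<mu>" by (rule meas_hh_DD(2)[OF assms(3,4)])
    show "AE x in \<mu>. norm (DD act act' \<theta> x) \<le> norm (w x)"
    proof (rule AE_I2)
      fix x assume x: "x \<in> space \<mu>"
      have "norm (DD act act' \<theta> x) \<le> w x" by (rule w(2)[OF x])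
      also have "\<dots> \<le> norm (w x)" by simp
      finally show "norm (DD act act' \<theta> x) \<le> norm (w x)" .
    qed
  qed
qed

lemma risk_deriv:
  assumes r: "r \<ge> 1"
  shows "(risk l idx L (act_r R r) \<mu> f has_derivative (\<lambda>h. (\<integral>x. DD (act_r R r) (dR r) \<theta>0 x \<partial>\<mu>) \<bullet> h)) (at \<theta>0)"
proof -
  note P = aR_props[OF r]
  obtain w where w1: "integrable \<mu> w" and w2: "\<forall>\<theta> x act act'. (\<forall>k y. \<bar>act k y\<bar> \<le> \<bar>y\<bar>) \<longrightarrow> (\<forall>k y. \<bar>act' k y\<bar> \<le> max C 1) \<longrightarrow>
     norm \<theta> \<le> norm \<theta>0 + 1 \<longrightarrow> x \<in> space \<mu> \<longrightarrow> norm (DD act act' \<theta> x) \<le> w x"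
    using DD_dom[of "norm \<theta>0 + 1"] by (elim exE conjE)
  have w: "\<And>\<theta> x. norm \<theta> \<le> norm \<theta>0 + 1 \<Longrightarrow> x \<in> space \<mu> \<Longrightarrow> norm (DD (act_r R r) (dR r) \<theta> x) \<le> w x"
    using w2[rule_format, OF P(1,2)[rule_format]] by auto
  show ?thesis
    unfolding risk_eq
  proof (rule deriv_under_integral[where w=w])
    show "integrable \<mu> (hh (act_r R r) \<theta>)" for \<theta>
      using integrable_r r unfolding hh_def[abs_def] by auto
    show "integrable \<mu> (DD (act_r R r) (dR r) \<theta>0)" by (rule DD_int[OF P(1,2,5,6)])
    show "((\<lambda>\<theta>. hh (act_r R r) \<theta> x) has_derivative (\<lambda>h. DD (act_r R r) (dR r) \<theta> x \<bullet> h)) (at \<theta>)" for \<theta> x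
      by (rule hh_deriv[OF P(3)])
    show "integrable \<mu> w" by (rule w1)
    show "norm (DD (act_r R r) (dR r) \<theta> x) \<le> w x" if "norm (\<theta> - \<theta>0) \<le> 1" "x \<in> space \<mu>" for \<theta> x
    proof (rule w[OF _ that(2)])
      have "norm \<theta> \<le> norm (\<theta> - \<theta>0) + norm \<theta>0" using norm_triangle_ineq[of "\<theta> - \<theta>0" \<theta>0] by simp
      then show "norm \<theta> \<le> norm \<theta>0 + 1" using that(1) by simp
    qed
  qed
qed

lemma grad_eq:
  assumes r: "r \<ge> 1"
  shows "grad (risk l idx L (act_r R r) \<mu> f) \<theta> = (\<integral>x. DD (act_r R r) (dR r) \<theta> x \<partial>\<mu>)"
proof -
  let ?c = "\<integral>x. DD (act_r R r) (dR r) \<theta> x \<partial>\<mu>"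
  have d: "(risk l idx L (act_r R r) \<mu> f has_derivative (\<lambda>h. ?c \<bullet> h)) (at \<theta>)" by (rule risk_deriv[OF r])
  then have "\<exists>g. (risk l idx L (act_r R r) \<mu> f has_derivative (\<lambda>h. g \<bullet> h)) (at \<theta>)" by blast
  then have g: "(risk l idx L (act_r R r) \<mu> f has_derivative (\<lambda>h. grad (risk l idx L (act_r R r) \<mu> f) \<theta> \<bullet> h)) (at \<theta>)"
    unfolding grad_def by (rule someI_ex)
  have "(\<lambda>h. grad (risk l idx L (act_r R r) \<mu> f) \<theta> \<bullet> h) = (\<lambda>h. ?c \<bullet> h)" by (rule has_derivative_unique[OF g d])
  then have e: "grad (risk l idx L (act_r R r) \<mu> f) \<theta> \<bullet> h = ?c \<bullet> h" for h
    using fun_cong[of "\<lambda>h. grad (risk l idx L (act_r R r) \<mu> f) \<theta> \<bullet> h" "\<lambda>h. ?c \<bullet> h" h] by simp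
  show ?thesis by (rule euclidean_eqI[OF e])
qed

lemma grad_cont:
  assumes r: "r \<ge> 1"
  shows "continuous_on UNIV (\<lambda>\<theta>. \<integral>x. DD (act_r R r) (dR r) \<theta> x \<partial>\<mu>)"
proof (rule cont_under_integral)
  note P = aR_props[OF r]
  show "DD (act_r R r) (dR r) \<theta> \<in> borel_measurable \<mu>" for \<theta> by (rule meas_hh_DD(2)[OF P(5,6)])
  show "continuous_on UNIV (\<lambda>\<theta>. DD (act_r R r) (dR r) \<theta> x)" for x
    unfolding DD_def
    by (intro continuous_on_sum continuous_on_scaleR continuous_on_mult continuous_on_diff continuous_on_const net_cont[OF P(3)] netgrad_cont[OF P(3) P(4)])
  show "\<exists>w. integrable \<mu> w \<and> (\<forall>\<theta> x. norm \<theta> \<le> \<rho> \<longrightarrow> x \<in> space \<mu> \<longrightarrow> norm (DD (act_r R r) (dR r) \<theta> x) \<le> w x)" for \<rho>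
  proof -
    obtain w where w1: "integrable \<mu> w" and w2: "\<forall>\<theta> x act act'. (\<forall>k y. \<bar>act k y\<bar> \<le> \<bar>y\<bar>) \<longrightarrow> (\<forall>k y. \<bar>act' k y\<bar> \<le> max C 1) \<longrightarrow>
       norm \<theta> \<le> \<rho> \<longrightarrow> x \<in> space \<mu> \<longrightarrow> norm (DD act act' \<theta> x) \<le> w x"
      using DD_dom[of \<rho>] by (elim exE conjE)
    show ?thesis using w1 w2[rule_format, OF P(1,2)[rule_format]] by auto
  qed
qed

end

context NetSet
begin

lemma DD_lim_pt: "((\<lambda>r. DD (act_r R r) (dR r) \<theta> x) \<longlongrightarrow> DD (\<lambda>_. relu) di \<theta> x) at_top"
  unfolding DD_def dR_def di_def
  by (intro tendsto_intros conv_net_plain conv_grad)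

lemma hh_lim_pt: "((\<lambda>r. hh (act_r R r) \<theta> x) \<longlongrightarrow> hh (\<lambda>_. relu) \<theta> x) at_top"
  unfolding hh_def
  by (intro tendsto_intros conv_net_plain)

lemma max1: "\<forall>\<^sub>F r in at_top. max r 1 = (r::real)"
  using eventually_ge_at_top[of "1::real"] by eventually_elim simp

lemma grad_lim: "((\<lambda>r. \<integral>x. DD (act_r R (max r 1)) (dR (max r 1)) \<theta> x \<partial>\<mu>) \<longlongrightarrow> (\<integral>x. DD (\<lambda>_. relu) di \<theta> x \<partial>\<mu>)) at_top"
proof -
  obtain w where w1: "integrable \<mu> w" and w2: "\<forall>\<theta>' x act act'. (\<forall>k y. \<bar>act k y\<bar> \<le> \<bar>y\<bar>) \<longrightarrow> (\<forall>k y. \<bar>act' k y\<bar> \<le> max C 1) \<longrightarrow>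
     norm \<theta>' \<le> norm \<theta> \<longrightarrow> x \<in> space \<mu> \<longrightarrow> norm (DD act act' \<theta>' x) \<le> w x"
    using DD_dom[of "norm \<theta>"] by (elim exE conjE)
  show ?thesis
  proof (rule integral_dominated_convergence_at_top[where w=w])
    show "DD (\<lambda>_. relu) di \<theta> \<in> borel_measurable \<mu>" by (rule meas_hh_DD(2)[OF ai_props(3,4)])
    show "DD (act_r R (max r 1)) (dR (max r 1)) \<theta> \<in> borel_measurable \<mu>" for r
      using aR_props(5,6)[of "max r 1"] by (intro meas_hh_DD(2)) auto
    show "integrable \<mu> w" by (rule w1)
    show "AE x in \<mu>. ((\<lambda>r. DD (act_r R (max r 1)) (dR (max r 1)) \<theta> x) \<longlongrightarrow> DD (\<lambda>_. relu) di \<theta> x) at_top"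
    proof (rule AE_I2)
      fix x
      show "((\<lambda>r. DD (act_r R (max r 1)) (dR (max r 1)) \<theta> x) \<longlongrightarrow> DD (\<lambda>_. relu) di \<theta> x) at_top"
        by (rule Lim_transform_eventually[OF DD_lim_pt]) (use max1 in \<open>auto elim: eventually_mono\<close>)
    qed
    show "\<forall>\<^sub>F r in at_top. AE x in \<mu>. norm (DD (act_r R (max r 1)) (dR (max r 1)) \<theta> x) \<le> w x"
    proof (rule always_eventually, rule allI, rule AE_I2)
      fix r :: real and x assume x: "x \<in> space \<mu>"
      have r: "max r 1 \<ge> 1" by (rule max.cobounded2)
      show "norm (DD (act_r R (max r 1)) (dR (max r 1)) \<theta> x) \<le> w x"
        by (rule w2[rule_format, OF aR_props(1,2)[OF r, rule_format] order_refl x])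
    qed
  qed
qed

lemma risk_lim: "((\<lambda>r. risk l idx L (act_r R (max r 1)) \<mu> f \<theta>) \<longlongrightarrow> risk l idx L (\<lambda>_. relu) \<mu> f \<theta>) at_top"
proof -
  obtain w where w1: "integrable \<mu> w" and w2: "\<forall>\<theta>' x act. (\<forall>k y. \<bar>act k y\<bar> \<le> \<bar>y\<bar>) \<longrightarrow>
     norm \<theta>' \<le> norm \<theta> \<longrightarrow> x \<in> space \<mu> \<longrightarrow> norm (hh act \<theta>' x) \<le> w x"
    using hh_dom[of "norm \<theta>"] by (elim exE conjE)
  show ?thesis
    unfolding risk_eq
  proof (rule integral_dominated_convergence_at_top[where w=w])
    show "hh (\<lambda>_. relu) \<theta> \<in> borel_measurable \<mu>" by (rule meas_hh_DD(1)[OF ai_props(3,4)])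
    show "hh (act_r R (max r 1)) \<theta> \<in> borel_measurable \<mu>" for r
      using aR_props(5,6)[of "max r 1"] by (intro meas_hh_DD(1)) auto
    show "integrable \<mu> w" by (rule w1)
    show "AE x in \<mu>. ((\<lambda>r. hh (act_r R (max r 1)) \<theta> x) \<longlongrightarrow> hh (\<lambda>_. relu) \<theta> x) at_top"
    proof (rule AE_I2)
      fix x
      show "((\<lambda>r. hh (act_r R (max r 1)) \<theta> x) \<longlongrightarrow> hh (\<lambda>_. relu) \<theta> x) at_top"
        by (rule Lim_transform_eventually[OF hh_lim_pt]) (use max1 in \<open>auto elim: eventually_mono\<close>)
    qed
    show "\<forall>\<^sub>F r in at_top. AE x in \<mu>. norm (hh (act_r R (max r 1)) \<theta> x) \<le> w x"
    proof (rule always_eventually, rule allI, rule AE_I2)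
      fix r :: real and x assume x: "x \<in> space \<mu>"
      have r: "max r 1 \<ge> 1" by (rule max.cobounded2)
      show "norm (hh (act_r R (max r 1)) \<theta> x) \<le> w x"
        by (rule w2[rule_format, OF aR_props(1)[OF r, rule_format] order_refl x])
    qed
  qed
qed

lemma grad_bound:
  "\<exists>K. \<forall>\<theta>. norm \<theta> \<le> \<rho> \<longrightarrow> (\<forall>r\<ge>1. norm (\<integral>x. DD (act_r R r) (dR r) \<theta> x \<partial>\<mu>) \<le> K) \<and>
      norm (\<integral>x. DD (\<lambda>_. relu) di \<theta> x \<partial>\<mu>) \<le> K"
proof -
  obtain w where w1: "integrable \<mu> w" and w2: "\<forall>\<theta>' x act act'. (\<forall>k y. \<bar>act k y\<bar> \<le> \<bar>y\<bar>) \<longrightarrow> (\<forall>k y. \<bar>act' k y\<bar> \<le> max C 1) \<longrightarrow>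
     norm \<theta>' \<le> \<rho> \<longrightarrow> x \<in> space \<mu> \<longrightarrow> norm (DD act act' \<theta>' x) \<le> w x"
    using DD_dom[of \<rho>] by (elim exE conjE)
  have gen: "norm (\<integral>x. DD act act' \<theta> x \<partial>\<mu>) \<le> (\<integral>x. w x \<partial>\<mu>)"
    if a: "\<forall>k y. \<bar>act k y\<bar> \<le> \<bar>y\<bar>" "\<forall>k y. \<bar>act' k y\<bar> \<le> max C 1"
      "\<And>k. act k \<in> borel_measurable borel" "\<And>k. act' k \<in> borel_measurable borel" and th: "norm \<theta> \<le> \<rho>"
    for act act' and \<theta> :: "real^'d"
  proof -
    have "norm (\<integral>x. DD act act' \<theta> x \<partial>\<mu>) \<le> (\<integral>x. norm (DD act act' \<theta> x) \<partial>\<mu>)" by (rule integral_norm_bound)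
    also have "\<dots> \<le> (\<integral>x. w x \<partial>\<mu>)"
    proof (rule integral_mono)
      show "integrable \<mu> (\<lambda>x. norm (DD act act' \<theta> x))" by (rule integrable_norm[OF DD_int[OF a]])
      show "integrable \<mu> w" by (rule w1)
      fix x assume "x \<in> space \<mu>"
      then show "norm (DD act act' \<theta> x) \<le> w x" by (rule w2[rule_format, OF a(1,2)[rule_format] th])
    qed
    finally show ?thesis .
  qed
  show ?thesis
  proof (intro exI[of _ "\<integral>x. w x \<partial>\<mu>"] allI impI conjI)
    fix \<theta> :: "real^'d" and r :: real assume th: "norm \<theta> \<le> \<rho>" and r: "r \<ge> 1"
    show "norm (\<integral>x. DD (act_r R r) (dR r) \<theta> x \<partial>\<mu>) \<le> (\<integral>x. w x \<partial>\<mu>)"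
      by (rule gen[OF aR_props(1,2,5,6)[OF r] th])
  next
    fix \<theta> :: "real^'d" assume th: "norm \<theta> \<le> \<rho>"
    show "norm (\<integral>x. DD (\<lambda>_. relu) di \<theta> x \<partial>\<mu>) \<le> (\<integral>x. w x \<partial>\<mu>)"
      by (rule gen[OF ai_props th])
  qed
qed

end

context NetSet
begin

lemma main_result:
  fixes G :: "real^'d \<Rightarrow> real^'d" and \<Theta> :: "real \<Rightarrow> real^'d" and T t :: real
  assumes G_lim: "\<forall>\<theta> g. ((\<lambda>r. grad (risk l idx L (act_r R r) \<mu> f) \<theta>) \<longlongrightarrow> g) at_top \<longrightarrow> G \<theta> = g"
    and Theta_cont: "continuous_on {0..T} \<Theta>"
    and Theta_int: "\<forall>t\<in>{0..T}. set_integrable lborel {0..t} (\<lambda>s. G (\<Theta> s))"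
    and Theta_eq: "\<forall>t\<in>{0..T}. \<Theta> t = \<Theta> 0 - (LINT s:{0..t}|lborel. G (\<Theta> s))"
    and t: "t \<in> {0..T}"
  shows "risk l idx L (\<lambda>_. relu) \<mu> f (\<Theta> t) =
           risk l idx L (\<lambda>_. relu) \<mu> f (\<Theta> 0) - (LINT s:{0..t}|lborel. (norm (G (\<Theta> s)))\<^sup>2)"
proof -
  define DF where "DF r \<theta> = (\<integral>x. DD (act_r R (max r 1)) (dR (max r 1)) \<theta> x \<partial>\<mu>)" for r \<theta>
  define Ginf where "Ginf \<theta> = (\<integral>x. DD (\<lambda>_. relu) di \<theta> x \<partial>\<mu>)" for \<theta>
  have Geq: "G \<theta> = Ginf \<theta>" for \<theta>
  proof -
    have "((\<lambda>r. grad (risk l idx L (act_r R r) \<mu> f) \<theta>) \<longlongrightarrow> Ginf \<theta>) at_top"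
    proof (rule Lim_transform_eventually[OF grad_lim[of \<theta>, folded Ginf_def]])
      show "\<forall>\<^sub>F r in at_top. (\<integral>x. DD (act_r R (max r 1)) (dR (max r 1)) \<theta> x \<partial>\<mu>) = grad (risk l idx L (act_r R r) \<mu> f) \<theta>"
        using eventually_ge_at_top[of "1::real"] by eventually_elim (simp add: grad_eq)
    qed
    then show ?thesis by (rule G_lim[rule_format])
  qed
  have DFlim: "((\<lambda>r. DF r \<theta>) \<longlongrightarrow> G \<theta>) at_top" for \<theta>
    unfolding DF_def Geq Ginf_def by (rule grad_lim)
  have T0: "0 \<le> T" "0 \<le> t" "t \<le> T" using t by auto
  have gi: "set_integrable lborel {0..T} (\<lambda>s. G (\<Theta> s))" using Theta_int T0 by auto
  have git: "set_integrable lborel {0..t} (\<lambda>s. G (\<Theta> s))" using Theta_int t by auto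
  have "compact (\<Theta> ` {0..T})" using Theta_cont by (intro compact_continuous_image) auto
  then obtain \<rho> where \<rho>: "\<And>s. s \<in> {0..T} \<Longrightarrow> norm (\<Theta> s) \<le> \<rho>"
    by (meson bounded_iff compact_imp_bounded imageI)
  obtain K where K0: "\<forall>\<theta>. norm \<theta> \<le> \<rho> \<longrightarrow> (\<forall>r\<ge>1. norm (\<integral>x. DD (act_r R r) (dR r) \<theta> x \<partial>\<mu>) \<le> K) \<and>
      norm (\<integral>x. DD (\<lambda>_. relu) di \<theta> x \<partial>\<mu>) \<le> K"
    using grad_bound[of \<rho>] by (elim exE)
  have K: "\<And>\<theta> r. norm \<theta> \<le> \<rho> \<Longrightarrow> r \<ge> 1 \<Longrightarrow> norm (\<integral>x. DD (act_r R r) (dR r) \<theta> x \<partial>\<mu>) \<le> K"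
    using K0 by simp
  have DFK: "norm (DF r (\<Theta> s)) \<le> K" if "s \<in> {0..T}" for r s
    unfolding DF_def by (rule K[OF \<rho>[OF that]]) simp
  have chain: "risk l idx L (act_r R (max r 1)) \<mu> f (\<Theta> t) =
      risk l idx L (act_r R (max r 1)) \<mu> f (\<Theta> 0) - (LINT s:{0..t}|lborel. DF r (\<Theta> s) \<bullet> G (\<Theta> s))" for r
  proof -
    have r: "max r 1 \<ge> 1" by (rule max.cobounded2)
    show ?thesis unfolding DF_def
      by (rule chain_rule_integral[OF risk_deriv[OF r] grad_cont[OF r] Theta_cont gi Theta_eq[rule_format] t])
  qed
  have Ilim: "((\<lambda>r. LINT s:{0..t}|lborel. DF r (\<Theta> s) \<bullet> G (\<Theta> s)) \<longlongrightarrow> (LINT s:{0..t}|lborel. (norm (G (\<Theta> s)))\<^sup>2)) at_top"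
    unfolding set_lebesgue_integral_def
  proof (rule integral_dominated_convergence_at_top[where w="\<lambda>s. indicator {0..t} s *\<^sub>R (K * norm (G (\<Theta> s)))"])
    have mG: "(\<lambda>s. indicator {0..t} s *\<^sub>R G (\<Theta> s)) \<in> borel_measurable lborel"
      using git unfolding set_integrable_def by auto
    have "(\<lambda>s. (indicator {0..t} s *\<^sub>R G (\<Theta> s)) \<bullet> (indicator {0..t} s *\<^sub>R G (\<Theta> s))) \<in> borel_measurable lborel"
      using mG mG by (rule borel_measurable_inner)
    then show "(\<lambda>s. indicator {0..t} s *\<^sub>R (norm (G (\<Theta> s)))\<^sup>2) \<in> borel_measurable lborel"
      by (rule measurable_cong[THEN iffD1, rotated]) (auto simp: indicator_def power2_norm_eq_inner)
    show "(\<lambda>s. indicator {0..t} s *\<^sub>R (DF r (\<Theta> s) \<bullet> G (\<Theta> s))) \<in> borel_measurable lborel" for r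
    proof -
      have r: "max r 1 \<ge> 1" by (rule max.cobounded2)
      have c: "continuous_on {0..t} (\<lambda>s. DF r (\<Theta> s))"
        unfolding DF_def
        by (rule continuous_on_compose2[OF grad_cont[OF r] continuous_on_subset[OF Theta_cont]]) (use T0 in auto)
      have "(\<lambda>s. indicator {0..t} s *\<^sub>R DF r (\<Theta> s)) \<in> borel_measurable lborel"
        unfolding measurable_lborel2 by (rule borel_measurable_continuous_on_indicator[OF _ c]) simp
      then have "(\<lambda>s. (indicator {0..t} s *\<^sub>R DF r (\<Theta> s)) \<bullet> (indicator {0..t} s *\<^sub>R G (\<Theta> s))) \<in> borel_measurable lborel"
        using mG by (rule borel_measurable_inner)
      then show ?thesis
        by (rule measurable_cong[THEN iffD1, rotated]) (auto simp: indicator_def)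
    qed
    have "integrable lborel (\<lambda>s. norm (indicator {0..t} s *\<^sub>R G (\<Theta> s)))"
      using git unfolding set_integrable_def by (rule integrable_norm)
    then have "integrable lborel (\<lambda>s. K * norm (indicator {0..t} s *\<^sub>R G (\<Theta> s)))"
      by (rule integrable_mult_right)
    then show "integrable lborel (\<lambda>s. indicator {0..t} s *\<^sub>R (K * norm (G (\<Theta> s))))"
    proof -
      have "(\<lambda>s. K * norm (indicator {0..t} s *\<^sub>R G (\<Theta> s))) = (\<lambda>s. indicator {0..t} s *\<^sub>R (K * norm (G (\<Theta> s))))"
        by (auto simp: indicator_def fun_eq_iff)
      then show ?thesis using \<open>integrable lborel (\<lambda>s. K * norm (indicator {0..t} s *\<^sub>R G (\<Theta> s)))\<close> by simp
    qed
    show "AE s in lborel. ((\<lambda>r. indicator {0..t} s *\<^sub>R (DF r (\<Theta> s) \<bullet> G (\<Theta> s))) \<longlongrightarrow> indicator {0..t} s *\<^sub>R (norm (G (\<Theta> s)))\<^sup>2) at_top"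
    proof (rule AE_I2)
      fix s
      have "((\<lambda>r. DF r (\<Theta> s) \<bullet> G (\<Theta> s)) \<longlongrightarrow> G (\<Theta> s) \<bullet> G (\<Theta> s)) at_top"
        by (intro tendsto_inner DFlim tendsto_const)
      then show "((\<lambda>r. indicator {0..t} s *\<^sub>R (DF r (\<Theta> s) \<bullet> G (\<Theta> s))) \<longlongrightarrow> indicator {0..t} s *\<^sub>R (norm (G (\<Theta> s)))\<^sup>2) at_top"
        by (intro tendsto_scaleR tendsto_const) (simp add: power2_norm_eq_inner)
    qed
    show "\<forall>\<^sub>F r in at_top. AE s in lborel. norm (indicator {0..t} s *\<^sub>R (DF r (\<Theta> s) \<bullet> G (\<Theta> s))) \<le> indicator {0..t} s *\<^sub>R (K * norm (G (\<Theta> s)))"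
    proof (rule always_eventually, rule allI, rule AE_I2)
      fix r s
      show "norm (indicator {0..t} s *\<^sub>R (DF r (\<Theta> s) \<bullet> G (\<Theta> s))) \<le> indicator {0..t} s *\<^sub>R (K * norm (G (\<Theta> s)))"
      proof (cases "s \<in> {0..t}")
        case True
        then have sT: "s \<in> {0..T}" using T0 by auto
        have "\<bar>DF r (\<Theta> s) \<bullet> G (\<Theta> s)\<bar> \<le> norm (DF r (\<Theta> s)) * norm (G (\<Theta> s))" by (rule Cauchy_Schwarz_ineq2)
        also have "\<dots> \<le> K * norm (G (\<Theta> s))" by (rule mult_right_mono[OF DFK[OF sT] norm_ge_zero])
        finally show ?thesis using True by simp
      qed simp
    qed
  qed
  have lim_left: "((\<lambda>r. risk l idx L (act_r R (max r 1)) \<mu> f (\<Theta> t)) \<longlongrightarrow> risk l idx L (\<lambda>_. relu) \<mu> f (\<Theta> t)) at_top"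
    by (rule risk_lim)
  have lim_right: "((\<lambda>r. risk l idx L (act_r R (max r 1)) \<mu> f (\<Theta> 0) - (LINT s:{0..t}|lborel. DF r (\<Theta> s) \<bullet> G (\<Theta> s)))
      \<longlongrightarrow> risk l idx L (\<lambda>_. relu) \<mu> f (\<Theta> 0) - (LINT s:{0..t}|lborel. (norm (G (\<Theta> s)))\<^sup>2)) at_top"
    by (intro tendsto_diff risk_lim Ilim)
  have "((\<lambda>r. risk l idx L (act_r R (max r 1)) \<mu> f (\<Theta> t)) \<longlongrightarrow> risk l idx L (\<lambda>_. relu) \<mu> f (\<Theta> 0) - (LINT s:{0..t}|lborel. (norm (G (\<Theta> s)))\<^sup>2)) at_top"
    using lim_right unfolding chain[symmetric] .
  note lim2 = this
  have "(at_top :: real filter) \<noteq> bot" by simp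
  from tendsto_unique[OF this lim_left lim2] show ?thesis .
qed

end

theorem proposition3p7:
  fixes L :: nat and l :: "nat \<Rightarrow> nat" and idx :: "nat \<Rightarrow> 'd::finite"
    and a b \<A> \<B> T :: real and R :: "real \<Rightarrow> real \<Rightarrow> real"
    and \<mu> :: "(nat \<Rightarrow> real) measure" and f :: "(nat \<Rightarrow> real) \<Rightarrow> (nat \<Rightarrow> real)"
    and G :: "real^'d \<Rightarrow> real^'d" and \<Theta> :: "real \<Rightarrow> real^'d"
  assumes L_pos: "L \<ge> 1"
    and l_pos: "\<forall>k. l k \<ge> 1"
    and idx_bij: "bij_betw idx {1..dpar l L} (UNIV :: 'd set)"
    and ab: "a < b"
    and AB: "0 < \<A>" "\<A> < \<B>"
    and R_C1: "\<forall>r\<ge>1. R r C1_differentiable_on UNIV"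
    and R_low: "\<forall>r\<ge>1. \<forall>x. x \<le> \<A> / r \<longrightarrow> R r x = 0"
    and R_bd: "\<forall>r\<ge>1. \<forall>y. 0 \<le> R r y \<and> R r y \<le> max y 0"
    and R_high: "\<forall>r\<ge>1. \<forall>z. z \<ge> \<B> / r \<longrightarrow> R r z = z"
    and R_deriv_bd: "\<exists>C. \<forall>r\<ge>1. \<forall>x. \<bar>deriv (R r) x\<bar> \<le> C"
    and mu_sets: "sets \<mu> = sets (PiM {1..l 0} (\<lambda>_. restrict_space borel {a..b}))"
    and mu_fin: "emeasure \<mu> (space \<mu>) < \<infinity>"
    and f_meas: "\<forall>i\<in>{1..l L}. (\<lambda>x. f x i) \<in> borel_measurable \<mu>"
    and integrable_r: "\<forall>r\<ge>1. \<forall>\<theta>. integrable \<mu>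
        (\<lambda>x. \<Sum>i=1..l L. (net l idx (act_r R r) \<theta> L x i - f x i)\<^sup>2)"
    and integrable_inf: "\<forall>\<theta>. integrable \<mu>
        (\<lambda>x. \<Sum>i=1..l L. (net l idx (\<lambda>_. relu) \<theta> L x i - f x i)\<^sup>2)"
    and G_lim: "\<forall>\<theta> g. ((\<lambda>r. grad (risk l idx L (act_r R r) \<mu> f) \<theta>) \<longlongrightarrow> g) at_top
        \<longrightarrow> G \<theta> = g"
    and T_pos: "0 < T"
    and Theta_cont: "continuous_on {0..T} \<Theta>"
    and Theta_int: "\<forall>t\<in>{0..T}. set_integrable lborel {0..t} (\<lambda>s. G (\<Theta> s))"
    and Theta_eq: "\<forall>t\<in>{0..T}. \<Theta> t = \<Theta> 0 - (LINT s:{0..t}|lborel. G (\<Theta> s))"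
  shows "\<forall>t\<in>{0..T}. risk l idx L (\<lambda>_. relu) \<mu> f (\<Theta> t) =
           risk l idx L (\<lambda>_. relu) \<mu> f (\<Theta> 0) - (LINT s:{0..t}|lborel. (norm (G (\<Theta> s)))\<^sup>2)"
proof -
  obtain C where Cb: "\<forall>r\<ge>1. \<forall>x. \<bar>deriv (R r) x\<bar> \<le> C" using R_deriv_bd by blast
  interpret NetSet R \<A> \<B> C l idx L \<mu> f a b
    by (unfold_locales) (use AB R_C1 R_low R_bd R_high Cb L_pos mu_sets mu_fin f_meas integrable_r integrable_inf in auto)
  show ?thesis using main_result[OF G_lim Theta_cont Theta_int Theta_eq] by blast
qed

end
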